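(* Let $s_1,\dots,s_{d-1}$ be positive integers, set $s_0=s_d=1$, and assume $s_{i-1}s_i\le n_i$ for all $i=1,\dots,d$. Then the set $\mathrm{ttrank}^{-1}(s_1,\dots,s_{d-1})$ of tensors of TT rank $(s_1,\dots,s_{d-1})$ is $G$-invariant, and the orbit $\Pi_{s_1\dots s_{d-1}}=G\cdot T$ of $$T=\sum_{\alpha_1=1}^{s_1}\cdots\sum_{\alpha_{d-1}=1}^{s_{d-1}} e_1^{\alpha_1}\otimes e_2^{\iota_2(\alpha_1,\alpha_2)}\otimes\cdots\otimes e_{d-1}^{\iota_{d-1}(\alpha_{d-2},\alpha_{d-1})}\otimes e_d^{\alpha_{d-1}}$$ is an open dense subset of $\mathrm{ttrank}^{-1}(s_1,\dots,s_{d-1})$ (Euclidean subspace topology; moreover it is Zariski open in the Zariski closure). Furthermore $\Pi_{s_1\dots s_{d-1}}$ consists exactly of the elements of $\mathrm{ttrank}^{-1}(s_1,\dots,s_{d-1})$ whose multilinear rank is the maximal possible value $(s_1,s_1s_2,s_2s_3,\dots,s_{d-2}s_{d-1},s_{d-1})$.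
   Context: Fix integers $d\ge 3$ and $n_1,\dots,n_d\ge 2$. $V=\mathbb{R}^{n_1}\otimes\cdots\otimes\mathbb{R}^{n_d}$, and $G=\mathrm{GL}(n_1)\times\cdots\times\mathrm{GL}(n_d)$ acts on $V$ by $(g_1,\dots,g_d)\cdot(v_1\otimes\cdots\otimes v_d)=(g_1v_1)\otimes\cdots\otimes(g_dv_d)$, extended linearly. $e_i^1,\dots,e_i^{n_i}$ is the standard basis of $\mathbb{R}^{n_i}$. The TT rank of $T\in V$ is $(s_1,\dots,s_{d-1})$ where $s_i$ is the rank of $T$ viewed as a linear map $\mathbb{R}^{n_1}\otimes\cdots\otimes\mathbb{R}^{n_i}\to\mathbb{R}^{n_{i+1}}\otimes\cdots\otimes\mathbb{R}^{n_d}$. The multilinear rank of $T$ is $(t_1,\dots,t_d)$ where $t_i$ is the rank of $T$ viewed as a linear map $\mathbb{R}^{n_i}\to\bigotimes_{j\ne i}\mathbb{R}^{n_j}$. For $2\le i\le d-1$, $\iota_i:[s_{i-1}]\times[s_i]\to[s_{i-1}s_i]$ is the lexicographic bijection with the first argument most significant. *)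

theory Defs
  imports "HOL-Analysis.Analysis" "HOL-Library.Function_Algebras"
begin

text \<open>Modes are numbered 1..d; the i-th index ranges over {..<n i} (0-based values).
  A tensor in V is a real function on multi-indices, zero outside the index box.\<close>

type_synonym tensor = "(nat \<Rightarrow> nat) \<Rightarrow> real"

definition idxs :: "nat \<Rightarrow> (nat \<Rightarrow> nat) \<Rightarrow> (nat \<Rightarrow> nat) set" where
  "idxs d n = (\<Pi>\<^sub>E i\<in>{1..d}. {..<n i})"

definition tensors :: "nat \<Rightarrow> (nat \<Rightarrow> nat) \<Rightarrow> tensor set" where
  "tensors d n = {T. \<forall>j. j \<notin> idxs d n \<longrightarrow> T j = 0}"

definition rowrank :: "('c \<Rightarrow> real) set \<Rightarrow> nat" where
  "rowrank R = vector_space.dim (\<lambda>a f x. a * f x) R"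

definition merge_idx :: "nat \<Rightarrow> (nat \<Rightarrow> nat) \<Rightarrow> (nat \<Rightarrow> nat) \<Rightarrow> (nat \<Rightarrow> nat)" where
  "merge_idx i r c = (\<lambda>k. if k \<le> i then r k else c k)"

text \<open>i-th TT rank: rank of the unfolding R^{n_1..n_i} -> R^{n_{i+1}..n_d}.\<close>
definition tt_rank_i :: "nat \<Rightarrow> (nat \<Rightarrow> nat) \<Rightarrow> tensor \<Rightarrow> nat \<Rightarrow> nat" where
  "tt_rank_i d n T i =
     rowrank ((\<lambda>r. \<lambda>c. T (merge_idx i r c)) ` (\<Pi>\<^sub>E k\<in>{1..i}. {..<n k}))"

definition ttrank_fibre :: "nat \<Rightarrow> (nat \<Rightarrow> nat) \<Rightarrow> (nat \<Rightarrow> nat) \<Rightarrow> tensor set" where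
  "ttrank_fibre d n s = {T \<in> tensors d n. \<forall>i\<in>{1..d-1}. tt_rank_i d n T i = s i}"

text \<open>i-th multilinear rank: rank of the mode-i unfolding R^{n_i} -> (other factors).\<close>
definition ml_rank_i :: "nat \<Rightarrow> (nat \<Rightarrow> nat) \<Rightarrow> tensor \<Rightarrow> nat \<Rightarrow> nat" where
  "ml_rank_i d n T i = rowrank ((\<lambda>a. \<lambda>c. T (c(i := a))) ` {..<n i})"

definition GLn :: "nat \<Rightarrow> (nat \<Rightarrow> nat \<Rightarrow> real) set" where
  "GLn m = {A. \<exists>B. \<forall>r<m. \<forall>c<m.
      (\<Sum>k<m. A r k * B k c) = (if r = c then 1 else 0) \<and>
      (\<Sum>k<m. B r k * A k c) = (if r = c then 1 else 0)}"

definition Grp :: "nat \<Rightarrow> (nat \<Rightarrow> nat) \<Rightarrow> (nat \<Rightarrow> nat \<Rightarrow> nat \<Rightarrow> real) set" where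
  "Grp d n = {g. \<forall>i\<in>{1..d}. g i \<in> GLn (n i)}"

text \<open>Action of (g_1,...,g_d) on V, the linear extension of v_1 x..x v_d |-> g_1 v_1 x..x g_d v_d.\<close>
definition act :: "nat \<Rightarrow> (nat \<Rightarrow> nat) \<Rightarrow> (nat \<Rightarrow> nat \<Rightarrow> nat \<Rightarrow> real) \<Rightarrow> tensor \<Rightarrow> tensor" where
  "act d n g T = (\<lambda>j. if j \<in> idxs d n then
      (\<Sum>k\<in>idxs d n. (\<Prod>i\<in>{1..d}. g i (j i) (k i)) * T k) else 0)"

definition outer :: "nat \<Rightarrow> (nat \<Rightarrow> nat) \<Rightarrow> (nat \<Rightarrow> nat \<Rightarrow> real) \<Rightarrow> tensor" where
  "outer d n v = (\<lambda>j. if j \<in> idxs d n then (\<Prod>i\<in>{1..d}. v i (j i)) else 0)"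

definition ebasis :: "nat \<Rightarrow> nat \<Rightarrow> real" where
  "ebasis a = (\<lambda>x. if x = a then 1 else 0)"

definition iota :: "(nat \<Rightarrow> nat) \<Rightarrow> nat \<Rightarrow> nat \<Rightarrow> nat \<Rightarrow> nat" where
  "iota s i a b = a * s i + b"

text \<open>Index used in mode i for the summation multi-index alpha (alpha_1..alpha_{d-1}).\<close>
definition tt_comp :: "nat \<Rightarrow> (nat \<Rightarrow> nat) \<Rightarrow> (nat \<Rightarrow> nat) \<Rightarrow> nat \<Rightarrow> nat" where
  "tt_comp d s \<alpha> i = (if i = 1 then \<alpha> 1 else if i = d then \<alpha> (d - 1)
                       else iota s i (\<alpha> (i - 1)) (\<alpha> i))"

definition ttT :: "nat \<Rightarrow> (nat \<Rightarrow> nat) \<Rightarrow> (nat \<Rightarrow> nat) \<Rightarrow> tensor" where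
  "ttT d n s = (\<lambda>j. \<Sum>\<alpha>\<in>(\<Pi>\<^sub>E k\<in>{1..d-1}. {..<s k}).
                  outer d n (\<lambda>i. ebasis (tt_comp d s \<alpha> i)) j)"

definition orbit :: "nat \<Rightarrow> (nat \<Rightarrow> nat) \<Rightarrow> tensor \<Rightarrow> tensor set" where
  "orbit d n T = (\<lambda>g. act d n g T) ` Grp d n"

inductive polyfun :: "(tensor \<Rightarrow> real) \<Rightarrow> bool" where
  pconst: "polyfun (\<lambda>T. c)"
| pcoord: "polyfun (\<lambda>T. T j)"
| padd: "polyfun p \<Longrightarrow> polyfun q \<Longrightarrow> polyfun (\<lambda>T. p T + q T)"
| pmult: "polyfun p \<Longrightarrow> polyfun q \<Longrightarrow> polyfun (\<lambda>T. p T * q T)"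

definition zclosed :: "nat \<Rightarrow> (nat \<Rightarrow> nat) \<Rightarrow> tensor set \<Rightarrow> bool" where
  "zclosed d n Z \<longleftrightarrow> (\<exists>P. (\<forall>p\<in>P. polyfun p) \<and> Z = {T \<in> tensors d n. \<forall>p\<in>P. p T = 0})"

definition zclosure :: "nat \<Rightarrow> (nat \<Rightarrow> nat) \<Rightarrow> tensor set \<Rightarrow> tensor set" where
  "zclosure d n A = \<Inter>{Z. zclosed d n Z \<and> A \<subseteq> Z}"

definition zopenin :: "nat \<Rightarrow> (nat \<Rightarrow> nat) \<Rightarrow> tensor set \<Rightarrow> tensor set \<Rightarrow> bool" where
  "zopenin d n Y A \<longleftrightarrow> (\<exists>Z. zclosed d n Z \<and> A = Y - Z)"

end

theory Submission
  imports Defs "Jordan_Normal_Form.Char_Poly" "Jordan_Normal_Form.Determinant"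
begin

lemma sum_fun_apply: "(sum f A) x = sum (\<lambda>a. f a x) A"
  by (induction A rule: infinite_finite_induct) auto

interpretation fv: vector_space "\<lambda>a (f::'c\<Rightarrow>real) x. a * f x"
  by unfold_locales (auto simp: fun_eq_iff algebra_simps)

interpretation fvp: vector_space_pair "\<lambda>a (f::'c\<Rightarrow>real) x. a * f x" "\<lambda>a (f::'d\<Rightarrow>real) x. a * f x"
  by unfold_locales

lemma lin_fvI:
  assumes "\<And>x y. L (x + y) = L x + L y" "\<And>c x. L (\<lambda>t. c * x t) = (\<lambda>t. c * L x t)"
  shows "Vector_Spaces.linear (\<lambda>a (f::'c\<Rightarrow>real) x. a * f x) (\<lambda>a (f::'d\<Rightarrow>real) x. a * f x) L"
  unfolding Vector_Spaces.linear_iff using assms fv.vector_space_axioms[where 'c='c] fv.vector_space_axioms[where 'c='d] by auto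

lemma fv_card_le_dim:
  fixes R B :: "('c \<Rightarrow> real) set"
  assumes "finite R" "B \<subseteq> R" "fv.independent B"
  shows "card B \<le> fv.dim R"
proof -
  obtain A where A: "A \<subseteq> R" "fv.independent A" "R \<subseteq> fv.span A" "card A = fv.dim R"
    using fv.basis_exists by blast
  have "finite A" using A assms finite_subset by blast
  then show ?thesis using fv.independent_span_bound[of A B] A assms by auto
qed

lemma fv_dim_image_le:
  fixes L :: "('c\<Rightarrow>real) \<Rightarrow> ('d\<Rightarrow>real)" and R :: "('c\<Rightarrow>real) set"
  assumes lin: "Vector_Spaces.linear (\<lambda>a (f::'c\<Rightarrow>real) x. a * f x) (\<lambda>a (f::'d\<Rightarrow>real) x. a * f x) L"
    and fin: "finite R" and sub: "R' \<subseteq> fv.span (L ` R)"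
  shows "fv.dim R' \<le> fv.dim R"
proof -
  obtain B where B: "B \<subseteq> R" "fv.independent B" "R \<subseteq> fv.span B" "card B = fv.dim R"
    using fv.basis_exists by blast
  have finB: "finite B" using B fin finite_subset by blast
  have "L ` R \<subseteq> L ` fv.span B" using B by auto
  also have "\<dots> = fv.span (L ` B)" using fvp.linear_span_image[OF lin] by simp
  finally have "fv.span (L ` R) \<subseteq> fv.span (L ` B)"
    using fv.span_minimal fv.subspace_span by metis
  with sub have "R' \<subseteq> fv.span (L ` B)" by auto
  then have "fv.dim R' \<le> card (L ` B)" using fv.dim_le_card finB by blast
  also have "\<dots> \<le> card B" using card_image_le finB by blast
  finally show ?thesis using B by simp
qed

lemma fv_rank_ge:
  fixes v :: "nat \<Rightarrow> 'c \<Rightarrow> real" and p :: "nat \<Rightarrow> 'c"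
  assumes H: "\<And>lam. (\<forall>\<nu><k. (\<Sum>\<mu><k. lam \<mu> * v \<mu> (p \<nu>)) = 0) \<Longrightarrow> (\<forall>\<mu><k. lam \<mu> = 0)"
    and sub: "v ` {..<k} \<subseteq> R" and fin: "finite R"
  shows "k \<le> fv.dim R"
proof -
  have inj: "inj_on v {..<k}"
  proof (rule inj_onI, rule ccontr)
    fix i j assume ij: "i \<in> {..<k}" "j \<in> {..<k}" "v i = v j" "i \<noteq> j"
    define lam where "lam = (\<lambda>\<mu>. if \<mu> = i then (1::real) else if \<mu> = j then -1 else 0)"
    have "\<forall>\<nu><k. (\<Sum>\<mu><k. lam \<mu> * v \<mu> (p \<nu>)) = 0"
    proof (intro allI impI)
      fix \<nu> assume "\<nu> < k"
      have "(\<Sum>\<mu><k. lam \<mu> * v \<mu> (p \<nu>)) = (\<Sum>\<mu>\<in>{i,j}. lam \<mu> * v \<mu> (p \<nu>))"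
        by (rule sum.mono_neutral_right) (use ij in \<open>auto simp: lam_def\<close>)
      also have "\<dots> = 0" using ij by (simp add: lam_def)
      finally show "(\<Sum>\<mu><k. lam \<mu> * v \<mu> (p \<nu>)) = 0" .
    qed
    from H[OF this] ij show False by (auto simp: lam_def)
  qed
  have ind: "fv.independent (v ` {..<k})"
  proof (rule fv.independent_if_scalars_zero)
    show "finite (v ` {..<k})" by simp
    fix f x assume s: "(\<Sum>x\<in>v ` {..<k}. (\<lambda>t. f x * x t)) = 0" and x: "x \<in> v ` {..<k}"
    have s2: "(\<Sum>\<mu><k. (\<lambda>t. f (v \<mu>) * v \<mu> t)) = 0"
      using s by (simp add: sum.reindex[OF inj])
    have "\<forall>\<nu><k. (\<Sum>\<mu><k. f (v \<mu>) * v \<mu> (p \<nu>)) = 0"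
    proof (intro allI impI)
      fix \<nu> assume "\<nu> < k"
      have "(\<Sum>\<mu><k. (\<lambda>t. f (v \<mu>) * v \<mu> t)) (p \<nu>) = 0" using s2 by simp
      then show "(\<Sum>\<mu><k. f (v \<mu>) * v \<mu> (p \<nu>)) = 0" by (simp add: sum_fun_apply)
    qed
    from H[OF this] x show "f x = 0" by auto
  qed
  have "card (v ` {..<k}) \<le> fv.dim R" using fv_card_le_dim[OF fin sub ind] .
  then show ?thesis using card_image[OF inj] by simp
qed

lemma fv_span_coef:
  fixes w :: "nat \<Rightarrow> 'c \<Rightarrow> real"
  assumes "f \<in> fv.span (w ` {..<s})"
  shows "\<exists>c. \<forall>x. f x = (\<Sum>\<gamma><s. c \<gamma> * w \<gamma> x)"
proof -
  let ?T = "{f. \<exists>c. \<forall>x. f x = (\<Sum>\<gamma><s. c \<gamma> * w \<gamma> x)}"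
  have "fv.subspace ?T"
    unfolding fv.subspace_def
  proof (intro conjI ballI allI)
    show "0 \<in> ?T" by (auto intro: exI[of _ "\<lambda>_. 0"])
  next
    fix x y assume "x \<in> ?T" "y \<in> ?T"
    then obtain c1 c2 where "\<forall>t. x t = (\<Sum>\<gamma><s. c1 \<gamma> * w \<gamma> t)" "\<forall>t. y t = (\<Sum>\<gamma><s. c2 \<gamma> * w \<gamma> t)" by auto
    then show "x + y \<in> ?T"
      by (auto intro!: exI[of _ "\<lambda>\<gamma>. c1 \<gamma> + c2 \<gamma>"] simp: sum.distrib algebra_simps)
  next
    fix c x assume "x \<in> ?T"
    then obtain c1 where "\<forall>t. x t = (\<Sum>\<gamma><s. c1 \<gamma> * w \<gamma> t)" by auto
    then show "(\<lambda>t. c * x t) \<in> ?T"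
      by (auto intro!: exI[of _ "\<lambda>\<gamma>. c * c1 \<gamma>"] simp: sum_distrib_left algebra_simps)
  qed
  moreover have "w ` {..<s} \<subseteq> ?T"
  proof
    fix f assume "f \<in> w ` {..<s}"
    then obtain \<gamma>0 where g: "\<gamma>0 < s" "f = w \<gamma>0" by auto
    have "\<forall>x. f x = (\<Sum>\<gamma><s. (if \<gamma> = \<gamma>0 then 1 else 0) * w \<gamma> x)"
    proof
      fix x
      have "(\<Sum>\<gamma><s. (if \<gamma> = \<gamma>0 then 1 else 0) * w \<gamma> x) = (\<Sum>\<gamma><s. if \<gamma> = \<gamma>0 then w \<gamma> x else 0)"
        by (rule sum.cong) auto
      then show "f x = (\<Sum>\<gamma><s. (if \<gamma> = \<gamma>0 then 1 else 0) * w \<gamma> x)" using g by (simp add: sum.delta)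
    qed
    then show "f \<in> ?T" by (intro CollectI exI[of _ "\<lambda>\<gamma>. if \<gamma> = \<gamma>0 then 1 else 0"])
  qed
  ultimately have "fv.span (w ` {..<s}) \<subseteq> ?T" using fv.span_minimal by blast
  then show ?thesis using assms by auto
qed

lemma fv_span_sumI:
  fixes w :: "'i \<Rightarrow> 'c \<Rightarrow> real"
  assumes "finite I" "\<And>i. i \<in> I \<Longrightarrow> w i \<in> fv.span S"
  shows "(\<lambda>x. \<Sum>i\<in>I. c i * w i x) \<in> fv.span S"
proof -
  have "(\<Sum>i\<in>I. (\<lambda>x. c i * w i x)) \<in> fv.span S"
    using assms by (intro fv.span_sum fv.span_scale) auto
  moreover have "(\<Sum>i\<in>I. (\<lambda>x. c i * w i x)) = (\<lambda>x. \<Sum>i\<in>I. c i * w i x)"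
    by (simp add: fun_eq_iff sum_fun_apply)
  ultimately show ?thesis by simp
qed

lemma fv_span_fam:
  fixes R :: "('c \<Rightarrow> real) set"
  assumes "finite R" "fv.dim R \<le> s"
  shows "\<exists>w. (\<forall>\<gamma>. w \<gamma> \<in> fv.span R) \<and> R \<subseteq> fv.span (w ` {..<s})"
proof -
  obtain B where B: "B \<subseteq> R" "fv.independent B" "R \<subseteq> fv.span B" "card B = fv.dim R"
    using fv.basis_exists by blast
  have finB: "finite B" using B assms finite_subset by blast
  obtain e where e: "bij_betw e {0..<card B} B" using ex_bij_betw_nat_finite[OF finB] by blast
  define w where "w = (\<lambda>\<gamma>. if \<gamma> < card B then e \<gamma> else 0)"
  have "\<forall>\<gamma>. w \<gamma> \<in> fv.span R"
  proof
    fix \<gamma>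
    show "w \<gamma> \<in> fv.span R"
    proof (cases "\<gamma> < card B")
      case True
      then have "e \<gamma> \<in> B" using bij_betw_apply[OF e] by auto
      then show ?thesis using True B(1) fv.span_base by (auto simp: w_def)
    qed (auto simp: w_def fv.span_zero)
  qed
  moreover have "B \<subseteq> w ` {..<s}"
  proof
    fix b assume "b \<in> B"
    then obtain \<gamma> where "\<gamma> < card B" "e \<gamma> = b" using e unfolding bij_betw_def by force
    then show "b \<in> w ` {..<s}" using B assms by (auto simp: w_def intro!: image_eqI[of _ _ \<gamma>])
  qed
  then have "R \<subseteq> fv.span (w ` {..<s})" using B fv.span_mono by blast
  ultimately show ?thesis by blast
qed

lemma finite_idxs: "finite (idxs d n)"
  unfolding idxs_def by (rule finite_PiE) auto

lemma sum_PiE_split: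
  fixes F :: "(nat \<Rightarrow> nat) \<Rightarrow> 'a::comm_monoid_add"
  assumes iD: "i \<le> D" and fin: "\<And>x. finite (A x)"
  shows "(\<Sum>k\<in>Pi\<^sub>E {1..D} A. F k) =
         (\<Sum>k1\<in>Pi\<^sub>E {1..i} A. \<Sum>k2\<in>Pi\<^sub>E {i+1..D} A. F (merge_idx i k1 k2))"
proof -
  let ?P1 = "Pi\<^sub>E {1..i} A" and ?P2 = "Pi\<^sub>E {i+1..D} A"
  let ?m = "\<lambda>(a,b). merge_idx i a b"
  have inj: "inj_on ?m (?P1 \<times> ?P2)"
  proof (rule inj_onI)
    fix p q assume p: "p \<in> ?P1 \<times> ?P2" and q: "q \<in> ?P1 \<times> ?P2" and eq0: "?m p = ?m q"
    obtain a b where pab: "p = (a, b)" by force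
    obtain a' b' where qab: "q = (a', b')" by force
    have a: "a \<in> ?P1" "a' \<in> ?P1" and b: "b \<in> ?P2" "b' \<in> ?P2" using p q pab qab by auto
    have eq: "merge_idx i a b = merge_idx i a' b'" using eq0 pab qab by simp
    have "a x = a' x \<and> b x = b' x" for x
    proof (cases "x \<le> i")
      case True
      then have "a x = a' x" using fun_cong[OF eq, of x] by (simp add: merge_idx_def)
      moreover have "b x = b' x" using b True by (auto simp: PiE_def extensional_def)
      ultimately show ?thesis by simp
    next
      case False
      then have "b x = b' x" using fun_cong[OF eq, of x] by (simp add: merge_idx_def)
      moreover have "a x = a' x" using a False by (auto simp: PiE_def extensional_def)
      ultimately show ?thesis by simp
    qed
    then show "p = q" using pab qab by (simp add: fun_eq_iff)
  qed
  have img: "?m ` (?P1 \<times> ?P2) = Pi\<^sub>E {1..D} A"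
  proof (intro equalityI subsetI)
    fix k assume "k \<in> ?m ` (?P1 \<times> ?P2)"
    then obtain a b where ab: "a \<in> ?P1" "b \<in> ?P2" "k = merge_idx i a b" by auto
    show "k \<in> Pi\<^sub>E {1..D} A"
      unfolding PiE_iff extensional_def mem_Collect_eq
    proof (intro conjI ballI allI impI)
      fix x assume "x \<in> {1..D}"
      then show "k x \<in> A x" using ab by (cases "x \<le> i") (auto simp: merge_idx_def PiE_iff)
    next
      fix x assume "x \<notin> {1..D}"
      then show "k x = undefined" using ab iD by (cases "x \<le> i") (auto simp: merge_idx_def PiE_def extensional_def)
    qed
  next
    fix k assume k: "k \<in> Pi\<^sub>E {1..D} A"
    have "k = merge_idx i (restrict k {1..i}) (restrict k {i+1..D})"
    proof
      fix x show "k x = merge_idx i (restrict k {1..i}) (restrict k {i+1..D}) x"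
        using k iD by (cases "x = 0"; cases "x \<le> i"; cases "x \<le> D") (auto simp: merge_idx_def PiE_def extensional_def)
    qed
    moreover have "restrict k {1..i} \<in> ?P1" "restrict k {i+1..D} \<in> ?P2" using k iD by (auto simp: PiE_iff)
    ultimately show "k \<in> ?m ` (?P1 \<times> ?P2)"
      by (intro image_eqI[of _ _ "(restrict k {1..i}, restrict k {i+1..D})"]) simp_all
  qed
  have "(\<Sum>k1\<in>?P1. \<Sum>k2\<in>?P2. F (merge_idx i k1 k2)) = (\<Sum>p\<in>?P1 \<times> ?P2. F (?m p))"
    by (simp only: sum.cartesian_product) (rule sum.cong, auto)
  also have "\<dots> = (\<Sum>k\<in>?m ` (?P1 \<times> ?P2). F k)" by (simp only: sum.reindex[OF inj] comp_def)
  finally show ?thesis using img by simp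
qed

lemma prod_split_at:
  fixes f :: "nat \<Rightarrow> 'a::comm_monoid_mult"
  assumes "i \<le> D"
  shows "(\<Prod>x\<in>{1..D}. f x) = (\<Prod>x\<in>{1..i}. f x) * (\<Prod>x\<in>{i+1..D}. f x)"
proof -
  have "{1..D} = {1..i} \<union> {i+1..D}" using assms by auto
  then show ?thesis by (simp add: prod.union_disjoint[symmetric] ivl_disj_int)
qed

lemma sum_PiE_upd:
  fixes F :: "(nat \<Rightarrow> nat) \<Rightarrow> 'a::comm_monoid_add"
  assumes l: "l \<in> I" and finI: "finite I" and fin: "\<And>x. finite (A x)"
  shows "(\<Sum>k\<in>Pi\<^sub>E I A. F k) = (\<Sum>b\<in>A l. \<Sum>k'\<in>Pi\<^sub>E (I - {l}) A. F (k'(l := b)))"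
proof -
  have I: "I = insert l (I - {l})" using l by auto
  have "(\<Sum>k\<in>Pi\<^sub>E I A. F k) = (\<Sum>k\<in>Pi\<^sub>E (insert l (I - {l})) A. F k)" using I by simp
  also have "\<dots> = (\<Sum>k\<in>(\<lambda>(y, g). g(l := y)) ` (A l \<times> Pi\<^sub>E (I - {l}) A). F k)"
    by (rule arg_cong[where f="sum F"], rule PiE_insert_eq)
  also have "\<dots> = (\<Sum>p\<in>A l \<times> Pi\<^sub>E (I - {l}) A. F ((\<lambda>(y, g). g(l := y)) p))"
  proof -
    have "inj_on (\<lambda>(y, g). g(l := y)) (A l \<times> Pi\<^sub>E (I - {l}) A)" by (rule inj_combinator) simp
    then show ?thesis by (simp only: sum.reindex comp_def)
  qed
  also have "\<dots> = (\<Sum>b\<in>A l. \<Sum>k'\<in>Pi\<^sub>E (I - {l}) A. F (k'(l := b)))"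
    by (simp only: sum.cartesian_product) (rule sum.cong, auto)
  finally show ?thesis .
qed

lemma idxs_mem: "j \<in> idxs d n \<Longrightarrow> x \<in> {1..d} \<Longrightarrow> j x < n x"
  unfolding idxs_def by (auto simp: PiE_iff)

lemma act_tensors: "act d n g T \<in> tensors d n"
  unfolding tensors_def act_def by auto

lemma act_cong:
  assumes "\<And>x a b. x \<in> {1..d} \<Longrightarrow> a < n x \<Longrightarrow> b < n x \<Longrightarrow> g x a b = g' x a b"
  shows "act d n g T = act d n g' T"
  unfolding act_def
proof (rule ext)
  fix j
  show "(if j \<in> idxs d n then \<Sum>k\<in>idxs d n. (\<Prod>i = 1..d. g i (j i) (k i)) * T k else 0) =
        (if j \<in> idxs d n then \<Sum>k\<in>idxs d n. (\<Prod>i = 1..d. g' i (j i) (k i)) * T k else 0)"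
    using assms idxs_mem by (auto intro!: sum.cong prod.cong)
qed

lemma act_id:
  assumes T: "T \<in> tensors d n"
  shows "act d n (\<lambda>x a b. if a = b then 1 else 0) T = T"
proof (rule ext)
  fix j
  show "act d n (\<lambda>x a b. if a = b then 1 else 0) T j = T j"
  proof (cases "j \<in> idxs d n")
    case True
    have "(\<Sum>k\<in>idxs d n. (\<Prod>i = 1..d. (if j i = k i then 1 else 0)) * T k) =
          (\<Sum>k\<in>idxs d n. if k = j then T k else 0)"
    proof (rule sum.cong[OF refl])
      fix k assume k: "k \<in> idxs d n"
      show "(\<Prod>i = 1..d. (if j i = k i then 1 else 0)) * T k = (if k = j then T k else 0)"
      proof (cases "k = j")
        case False
        then obtain x where "k x \<noteq> j x" by auto
        moreover have "x \<in> {1..d}"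
        proof (rule ccontr)
          assume "x \<notin> {1..d}"
          then have "k x = undefined" "j x = undefined" using k True by (auto simp: idxs_def PiE_def extensional_def)
          then show False using \<open>k x \<noteq> j x\<close> by simp
        qed
        ultimately have "(\<Prod>i = 1..d. (if j i = k i then 1 else 0)) = (0::real)"
          by (intro prod_zero) (auto intro!: bexI[of _ x])
        then show ?thesis using False by simp
      qed simp
    qed
    also have "\<dots> = T j" using True finite_idxs by (simp add: sum.delta')
    finally show ?thesis using True by (simp add: act_def)
  next
    case False
    then show ?thesis using T by (simp add: act_def tensors_def)
  qed
qed

lemma act_comp:
  assumes T: "T \<in> tensors d n"
  shows "act d n g (act d n h T) = act d n (\<lambda>x a b. \<Sum>c<n x. g x a c * h x c b) T"
proof (rule ext)
  fix j
  show "act d n g (act d n h T) j = act d n (\<lambda>x a b. \<Sum>c<n x. g x a c * h x c b) T j"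
  proof (cases "j \<in> idxs d n")
    case True
    let ?B = "idxs d n"
    have "act d n g (act d n h T) j =
      (\<Sum>k\<in>?B. (\<Prod>i = 1..d. g i (j i) (k i)) * (\<Sum>k'\<in>?B. (\<Prod>i = 1..d. h i (k i) (k' i)) * T k'))"
      using True by (simp add: act_def)
    also have "\<dots> = (\<Sum>k\<in>?B. \<Sum>k'\<in>?B. (\<Prod>i = 1..d. g i (j i) (k i)) * (\<Prod>i = 1..d. h i (k i) (k' i)) * T k')"
      by (simp add: sum_distrib_left mult.assoc)
    also have "\<dots> = (\<Sum>k'\<in>?B. \<Sum>k\<in>?B. (\<Prod>i = 1..d. g i (j i) (k i) * h i (k i) (k' i)) * T k')"
      by (subst sum.swap) (simp add: prod.distrib)
    also have "\<dots> = (\<Sum>k'\<in>?B. (\<Sum>k\<in>?B. (\<Prod>i = 1..d. g i (j i) (k i) * h i (k i) (k' i))) * T k')"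
      by (simp add: sum_distrib_right)
    also have "\<dots> = (\<Sum>k'\<in>?B. (\<Prod>i = 1..d. \<Sum>c<n i. g i (j i) c * h i c (k' i)) * T k')"
    proof (rule sum.cong[OF refl])
      fix k' assume "k' \<in> ?B"
      have "(\<Prod>i = 1..d. \<Sum>c<n i. g i (j i) c * h i c (k' i)) =
            (\<Sum>k\<in>?B. (\<Prod>i = 1..d. g i (j i) (k i) * h i (k i) (k' i)))"
        unfolding idxs_def by (rule prod_sum_PiE) auto
      then show "(\<Sum>k\<in>?B. (\<Prod>i = 1..d. g i (j i) (k i) * h i (k i) (k' i))) * T k' =
                 (\<Prod>i = 1..d. \<Sum>c<n i. g i (j i) c * h i c (k' i)) * T k'" by simp
    qed
    finally show ?thesis using True by (simp add: act_def)
  next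
    case False
    then show ?thesis by (simp add: act_def)
  qed
qed

lemma act_inv:
  assumes g: "g \<in> Grp d n"
  shows "\<exists>g'. \<forall>T\<in>tensors d n. act d n g' (act d n g T) = T"
proof -
  have "\<forall>x\<in>{1..d}. \<exists>B. \<forall>r<n x. \<forall>c<n x. (\<Sum>k<n x. B r k * g x k c) = (if r = c then 1 else 0)"
    using g unfolding Grp_def GLn_def by blast
  then obtain B where B: "\<And>x r c. x \<in> {1..d} \<Longrightarrow> r < n x \<Longrightarrow> c < n x \<Longrightarrow>
      (\<Sum>k<n x. B x r k * g x k c) = (if r = c then 1 else 0)"
    by metis
  have "act d n B (act d n g T) = T" if T: "T \<in> tensors d n" for T
  proof -
    have "act d n B (act d n g T) = act d n (\<lambda>x a b. \<Sum>c<n x. B x a c * g x c b) T" by (rule act_comp[OF T])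
    also have "\<dots> = act d n (\<lambda>x a b. if a = b then 1 else 0) T"
      by (rule act_cong) (simp add: B)
    also have "\<dots> = T" by (rule act_id[OF T])
    finally show ?thesis .
  qed
  then show ?thesis by blast
qed

lemma prod_ind:
  assumes "finite L"
  shows "(\<Prod>l\<in>L. if P l then (1::real) else 0) = (if \<forall>l\<in>L. P l then 1 else 0)"
  using assms by (induction L rule: finite_induct) auto

locale tts =
  fixes d :: nat and n s :: "nat \<Rightarrow> nat"
  assumes d3: "d \<ge> 3" and n2: "\<forall>i\<in>{1..d}. n i \<ge> 2" and spos: "\<forall>i\<in>{1..d-1}. s i > 0"
    and s0: "s 0 = 1" and sd: "s d = 1" and sn: "\<forall>i\<in>{1..d}. s (i - 1) * s i \<le> n i"
begin

definition AL where "AL = Pi\<^sub>E {1..d-1} (\<lambda>k. {..<s k})"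

lemma finite_AL: "finite AL"
  unfolding AL_def by (rule finite_PiE) auto

lemma AL_mem: "\<alpha> \<in> AL \<Longrightarrow> x \<in> {1..d-1} \<Longrightarrow> \<alpha> x < s x"
  unfolding AL_def by (auto simp: PiE_iff)

lemma comp_lt:
  assumes a: "\<alpha> \<in> AL" and l: "l \<in> {1..d}"
  shows "tt_comp d s \<alpha> l < s (l - 1) * s l"
proof -
  consider "l = 1" | "l = d" | "l \<noteq> 1" "l \<noteq> d" by blast
  then show ?thesis
  proof cases
    case 1
    then have "1 \<noteq> d" using d3 by auto
    then show ?thesis using 1 AL_mem[OF a, of 1] d3 s0 by (auto simp: tt_comp_def)
  next
    case 2
    then have "d \<noteq> 1" using d3 by auto
    then show ?thesis using 2 AL_mem[OF a, of "d-1"] d3 sd by (auto simp: tt_comp_def)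
  next
    case 3
    have "l - 1 \<in> {1..d-1}" "l \<in> {1..d-1}" using 3 l by auto
    then have x1: "\<alpha> (l - 1) < s (l - 1)" and x2: "\<alpha> l < s l" using AL_mem[OF a] by auto
    have "\<alpha> (l - 1) * s l + \<alpha> l < \<alpha> (l - 1) * s l + s l" using x2 by simp
    also have "\<dots> = (\<alpha> (l - 1) + 1) * s l" by simp
    also have "\<dots> \<le> s (l - 1) * s l" using x1 by (intro mult_le_mono1) simp
    finally show ?thesis using 3 by (simp add: tt_comp_def iota_def)
  qed
qed

lemma comp_lt_n: "\<alpha> \<in> AL \<Longrightarrow> l \<in> {1..d} \<Longrightarrow> tt_comp d s \<alpha> l < n l"
  using comp_lt sn less_le_trans by blast

lemma ttT_val:
  "ttT d n s j = (if j \<in> idxs d n then (\<Sum>\<alpha>\<in>AL. \<Prod>l\<in>{1..d}. if j l = tt_comp d s \<alpha> l then 1 else 0) else 0)"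
  by (cases "j \<in> idxs d n") (simp_all add: ttT_def outer_def ebasis_def AL_def)

lemma ttT_tensors: "ttT d n s \<in> tensors d n"
  unfolding tensors_def by (simp add: ttT_val)

lemma decode1:
  assumes a: "\<alpha> \<in> AL" and k: "k \<in> {1..d-1}"
  shows "\<alpha> k = (if k = 1 then tt_comp d s \<alpha> 1 else tt_comp d s \<alpha> k mod s k)"
proof (cases "k = 1")
  case True
  then show ?thesis using d3 by (simp add: tt_comp_def)
next
  case False
  then have "k \<noteq> d" using k d3 by auto
  moreover have "\<alpha> k < s k" using AL_mem[OF a k] .
  ultimately show ?thesis using False by (simp add: tt_comp_def iota_def)
qed

lemma decode2:
  assumes a: "\<alpha> \<in> AL" and k: "k \<in> {1..d-1}"
  shows "\<alpha> k = (if k = d - 1 then tt_comp d s \<alpha> d else tt_comp d s \<alpha> (k+1) div s (k+1))"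
proof (cases "k = d - 1")
  case True
  then show ?thesis using d3 by (simp add: tt_comp_def)
next
  case False
  then have k1: "k + 1 \<noteq> d" "k + 1 \<noteq> 1" "k + 1 \<in> {1..d-1}" using k d3 by auto
  have "\<alpha> (k+1) < s (k+1)" using AL_mem[OF a k1(3)] .
  moreover have "s (k+1) > 0" using spos k1 by auto
  ultimately show ?thesis using False k1 by (simp add: tt_comp_def iota_def)
qed

lemma comp_inj_except:
  assumes a: "\<alpha> \<in> AL" and b: "\<beta> \<in> AL" and eq: "\<forall>l\<in>{1..d} - {l0}. tt_comp d s \<alpha> l = tt_comp d s \<beta> l"
  shows "\<alpha> = \<beta>"
proof
  fix x
  show "\<alpha> x = \<beta> x"
  proof (cases "x \<in> {1..d-1}")
    case False
    then show ?thesis using a b by (auto simp: AL_def PiE_def extensional_def)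
  next
    case True
    show ?thesis
    proof (cases "x = l0")
      case False
      have "x \<in> {1..d} - {l0}" using True False by auto
      then have e: "tt_comp d s \<alpha> x = tt_comp d s \<beta> x" using eq by blast
      show ?thesis using decode1[OF a True] decode1[OF b True] e by (cases "x = 1") auto
    next
      case l0: True
      have "x + 1 \<in> {1..d} - {l0}" using True l0 by auto
      then have e: "tt_comp d s \<alpha> (x+1) = tt_comp d s \<beta> (x+1)" using eq by blast
      have "x = d - 1 \<Longrightarrow> x + 1 = d" using d3 by auto
      then show ?thesis using decode2[OF a True] decode2[OF b True] e by (cases "x = d - 1") auto
    qed
  qed
qed

lemma comp_inj:
  assumes "\<alpha> \<in> AL" "\<beta> \<in> AL" "\<forall>l\<in>{1..d}. tt_comp d s \<alpha> l = tt_comp d s \<beta> l"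
  shows "\<alpha> = \<beta>"
  using comp_inj_except[OF assms(1,2), of 0] assms(3) by auto

lemma ttT_val2:
  assumes j: "j \<in> idxs d n"
  shows "ttT d n s j = (if \<exists>\<alpha>\<in>AL. \<forall>l\<in>{1..d}. j l = tt_comp d s \<alpha> l then 1 else 0)"
proof -
  have "ttT d n s j = (\<Sum>\<alpha>\<in>AL. if \<forall>l\<in>{1..d}. j l = tt_comp d s \<alpha> l then 1 else 0)"
    using j by (simp add: ttT_val prod_ind)
  also have "\<dots> = (if \<exists>\<alpha>\<in>AL. \<forall>l\<in>{1..d}. j l = tt_comp d s \<alpha> l then 1 else 0)"
  proof (cases "\<exists>\<alpha>\<in>AL. \<forall>l\<in>{1..d}. j l = tt_comp d s \<alpha> l")
    case True
    then obtain \<alpha>0 where a0: "\<alpha>0 \<in> AL" "\<forall>l\<in>{1..d}. j l = tt_comp d s \<alpha>0 l" by blast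
    have "(\<Sum>\<alpha>\<in>AL. if \<forall>l\<in>{1..d}. j l = tt_comp d s \<alpha> l then 1 else 0) = (\<Sum>\<alpha>\<in>AL. if \<alpha> = \<alpha>0 then (1::real) else 0)"
    proof (rule sum.cong[OF refl])
      fix \<alpha> assume a: "\<alpha> \<in> AL"
      have "(\<forall>l\<in>{1..d}. j l = tt_comp d s \<alpha> l) \<longleftrightarrow> \<alpha> = \<alpha>0"
      proof
        assume H: "\<forall>l\<in>{1..d}. j l = tt_comp d s \<alpha> l"
        have "\<forall>l\<in>{1..d}. tt_comp d s \<alpha> l = tt_comp d s \<alpha>0 l" using H a0(2) by metis
        then show "\<alpha> = \<alpha>0" using comp_inj[OF a a0(1)] by blast
      next
        assume "\<alpha> = \<alpha>0" then show "\<forall>l\<in>{1..d}. j l = tt_comp d s \<alpha> l" using a0(2) by blast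
      qed
      then show "(if \<forall>l\<in>{1..d}. j l = tt_comp d s \<alpha> l then 1 else 0) = (if \<alpha> = \<alpha>0 then (1::real) else 0)" by simp
    qed
    also have "\<dots> = 1" using a0(1) finite_AL by (simp add: sum.delta')
    finally show ?thesis using True by simp
  next
    case False
    then show ?thesis by (intro trans[OF sum.neutral]) auto
  qed
  finally show ?thesis .
qed

lemma act_ttT:
  assumes j: "j \<in> idxs d n"
  shows "act d n g (ttT d n s) j = (\<Sum>\<alpha>\<in>AL. \<Prod>l\<in>{1..d}. g l (j l) (tt_comp d s \<alpha> l))"
proof -
  let ?B = "idxs d n"
  have "act d n g (ttT d n s) j = (\<Sum>k\<in>?B. (\<Prod>l\<in>{1..d}. g l (j l) (k l)) *
          (\<Sum>\<alpha>\<in>AL. \<Prod>l\<in>{1..d}. if k l = tt_comp d s \<alpha> l then 1 else 0))"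
    using j by (simp add: act_def ttT_val)
  also have "\<dots> = (\<Sum>\<alpha>\<in>AL. \<Sum>k\<in>?B. \<Prod>l\<in>{1..d}. g l (j l) (k l) * (if k l = tt_comp d s \<alpha> l then 1 else 0))"
    by (simp add: sum_distrib_left prod.distrib) (rule sum.swap)
  also have "\<dots> = (\<Sum>\<alpha>\<in>AL. \<Prod>l\<in>{1..d}. \<Sum>b<n l. g l (j l) b * (if b = tt_comp d s \<alpha> l then 1 else 0))"
    by (rule sum.cong[OF refl], unfold idxs_def, rule prod_sum_PiE[symmetric]) auto
  also have "\<dots> = (\<Sum>\<alpha>\<in>AL. \<Prod>l\<in>{1..d}. g l (j l) (tt_comp d s \<alpha> l))"
  proof (rule sum.cong[OF refl], rule prod.cong[OF refl])
    fix \<alpha> l assume a: "\<alpha> \<in> AL" and l: "l \<in> {1..d}"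
    have "(\<Sum>b<n l. g l (j l) b * (if b = tt_comp d s \<alpha> l then 1 else 0)) = (\<Sum>b<n l. if b = tt_comp d s \<alpha> l then g l (j l) b else 0)"
      by (rule sum.cong) auto
    also have "\<dots> = g l (j l) (tt_comp d s \<alpha> l)" using comp_lt_n[OF a l] by (simp add: sum.delta')
    finally show "(\<Sum>b<n l. g l (j l) b * (if b = tt_comp d s \<alpha> l then 1 else 0)) = g l (j l) (tt_comp d s \<alpha> l)" .
  qed
  finally show ?thesis .
qed

end

context tts begin

lemma tt_rank_fv: "tt_rank_i d n T i = fv.dim ((\<lambda>r c. T (merge_idx i r c)) ` (\<Pi>\<^sub>E k\<in>{1..i}. {..<n k}))"
  by (simp add: tt_rank_i_def rowrank_def)

lemma ml_rank_fv: "ml_rank_i d n T l = fv.dim ((\<lambda>a c. T (c(l := a))) ` {..<n l})"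
  by (simp add: ml_rank_i_def rowrank_def)

lemma finite_ttrows: "finite ((\<lambda>r c. T (merge_idx i r c)) ` (\<Pi>\<^sub>E k\<in>{1..i}. {..<n k}))"
  by (intro finite_imageI finite_PiE) auto

lemma s_pos_all: "x \<in> {1..d-1} \<Longrightarrow> s x > 0" using spos by auto

lemma tt_lower:
  assumes i: "i \<in> {1..d-1}"
  shows "s i \<le> tt_rank_i d n (ttT d n s) i"
proof -
  define ag where "ag = (\<lambda>\<gamma>::nat. restrict (\<lambda>x. if x = i then \<gamma> else 0) {1..d-1})"
  have agAL: "ag \<gamma> \<in> AL" if "\<gamma> < s i" for \<gamma>
    using that s_pos_all by (auto simp: ag_def AL_def PiE_iff)
  have agi: "ag \<gamma> i = \<gamma>" for \<gamma> using i by (simp add: ag_def)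
  define r where "r = (\<lambda>\<gamma>. restrict (tt_comp d s (ag \<gamma>)) {1..i})"
  define c where "c = (\<lambda>\<delta>. restrict (tt_comp d s (ag \<delta>)) {1..d})"
  define v where "v = (\<lambda>\<gamma> c'. ttT d n s (merge_idx i (r \<gamma>) c'))"
  have key: "v \<gamma> (c \<delta>) = (if \<gamma> = \<delta> then 1 else 0)" if g: "\<gamma> < s i" and dl: "\<delta> < s i" for \<gamma> \<delta>
  proof -
    let ?J = "merge_idx i (r \<gamma>) (c \<delta>)"
    have Jl: "?J l = (if l \<le> i then tt_comp d s (ag \<gamma>) l else tt_comp d s (ag \<delta>) l)" if "l \<in> {1..d}" for l
      using that i by (auto simp: merge_idx_def r_def c_def)
    have Jbox: "?J \<in> idxs d n"
      unfolding idxs_def PiE_iff extensional_def mem_Collect_eq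
    proof (intro conjI ballI allI impI)
      fix l assume l: "l \<in> {1..d}"
      then show "?J l \<in> {..<n l}" using Jl[OF l] comp_lt_n[OF agAL[OF g] l] comp_lt_n[OF agAL[OF dl] l] by auto
    next
      fix l assume "l \<notin> {1..d}"
      then show "?J l = undefined" using i by (cases "l = 0") (auto simp: merge_idx_def r_def c_def)
    qed
    show ?thesis
    proof (cases "\<gamma> = \<delta>")
      case True
      have "\<forall>l\<in>{1..d}. ?J l = tt_comp d s (ag \<gamma>) l" using Jl True by auto
      then show ?thesis using True ttT_val2[OF Jbox] agAL[OF g] by (auto simp: v_def)
    next
      case False
      have "\<not> (\<exists>\<alpha>\<in>AL. \<forall>l\<in>{1..d}. ?J l = tt_comp d s \<alpha> l)"
      proof
        assume "\<exists>\<alpha>\<in>AL. \<forall>l\<in>{1..d}. ?J l = tt_comp d s \<alpha> l"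
        then obtain \<alpha> where a: "\<alpha> \<in> AL" "\<forall>l\<in>{1..d}. ?J l = tt_comp d s \<alpha> l" by blast
        have i1: "i \<in> {1..d}" "i + 1 \<in> {1..d}" using i by auto
        have e1: "tt_comp d s \<alpha> i = tt_comp d s (ag \<gamma>) i" using a(2) Jl[OF i1(1)] i1 by auto
        have e2: "tt_comp d s \<alpha> (i+1) = tt_comp d s (ag \<delta>) (i+1)" using a(2) Jl[OF i1(2)] i1 by auto
        have e1': "tt_comp d s \<alpha> 1 = tt_comp d s (ag \<gamma>) 1" if "i = 1" using e1 that by simp
        have e2': "tt_comp d s \<alpha> d = tt_comp d s (ag \<delta>) d" if "i = d - 1" using e2 that i by auto
        have "\<alpha> i = \<gamma>"
          using decode1[OF a(1) i] decode1[OF agAL[OF g] i] e1 e1' agi by (cases "i = 1") auto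
        moreover have "\<alpha> i = \<delta>"
          using decode2[OF a(1) i] decode2[OF agAL[OF dl] i] e2 e2' agi by (cases "i = d - 1") auto
        ultimately show False using False by simp
      qed
      then show ?thesis using False ttT_val2[OF Jbox] by (simp add: v_def)
    qed
  qed
  show ?thesis unfolding tt_rank_fv
  proof (rule fv_rank_ge[of "s i" v c])
    fix lam assume H: "\<forall>\<nu><s i. (\<Sum>\<mu><s i. lam \<mu> * v \<mu> (c \<nu>)) = 0"
    show "\<forall>\<mu><s i. lam \<mu> = 0"
    proof (intro allI impI)
      fix \<mu> assume mu: "\<mu> < s i"
      have "(\<Sum>\<mu>'<s i. lam \<mu>' * v \<mu>' (c \<mu>)) = (\<Sum>\<mu>'<s i. if \<mu>' = \<mu> then lam \<mu>' else 0)"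
        by (rule sum.cong) (auto simp: key mu)
      also have "\<dots> = lam \<mu>" using mu by (simp add: sum.delta)
      finally show "lam \<mu> = 0" using H mu by simp
    qed
  next
    show "v ` {..<s i} \<subseteq> (\<lambda>r c. ttT d n s (merge_idx i r c)) ` (\<Pi>\<^sub>E k\<in>{1..i}. {..<n k})"
    proof
      fix f assume "f \<in> v ` {..<s i}"
      then obtain \<gamma> where g: "\<gamma> < s i" "f = v \<gamma>" by auto
      have "r \<gamma> \<in> (\<Pi>\<^sub>E k\<in>{1..i}. {..<n k})"
        using comp_lt_n[OF agAL[OF g(1)]] i by (auto simp: r_def)
      then show "f \<in> (\<lambda>r c. ttT d n s (merge_idx i r c)) ` (\<Pi>\<^sub>E k\<in>{1..i}. {..<n k})"
        using g by (auto simp: v_def)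
    qed
  qed (rule finite_ttrows)
qed

lemma s_l_pos: "l \<in> {1..d} \<Longrightarrow> s l > 0"
  using spos sd by (cases "l = d") auto

lemma s_lm1_pos:
  assumes "l \<in> {1..d}" shows "s (l - 1) > 0"
proof (cases "l = 1")
  case False
  then have "l - 1 \<in> {1..d-1}" using assms by auto
  then show ?thesis using spos by auto
qed (simp add: s0)

lemma ml_lower:
  assumes l: "l \<in> {1..d}"
  shows "s (l - 1) * s l \<le> ml_rank_i d n (ttT d n s) l"
proof -
  let ?m = "s (l - 1) * s l"
  define am where "am = (\<lambda>m. restrict (\<lambda>x. if x = l - 1 then m div s l else if x = l then m mod s l else 0) {1..d-1})"
  have slp: "s l > 0" using s_l_pos[OF l] .
  have amAL: "am m \<in> AL" if m: "m < ?m" for m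
    unfolding AL_def PiE_iff
  proof (intro conjI ballI)
    fix x assume x: "x \<in> {1..d-1}"
    show "am m x \<in> {..<s x}"
    proof (cases "x = l - 1")
      case True
      then show ?thesis using x m slp by (auto simp: am_def less_mult_imp_div_less)
    next
      case False
      then show ?thesis using x slp s_pos_all[OF x] by (cases "x = l") (auto simp: am_def)
    qed
  qed (simp add: am_def)
  have amc: "tt_comp d s (am m) l = m" if m: "m < ?m" for m
  proof -
    consider "l = 1" | "l = d" | "l \<noteq> 1" "l \<noteq> d" by blast
    then show ?thesis
    proof cases
      case 1
      then show ?thesis using m d3 s0 by (auto simp: tt_comp_def am_def)
    next
      case 2
      then show ?thesis using m d3 sd by (auto simp: tt_comp_def am_def)
    next
      case 3
      then have "l - 1 \<in> {1..d-1}" "l \<in> {1..d-1}" "l - 1 \<noteq> l" using l by auto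
      then show ?thesis using 3 by (simp add: tt_comp_def am_def iota_def)
    qed
  qed
  define p where "p = (\<lambda>\<nu>. restrict (tt_comp d s (am \<nu>)) {1..d})"
  define v where "v = (\<lambda>\<mu> c'. ttT d n s (c'(l := \<mu>)))"
  have mn: "?m \<le> n l" using sn l by auto
  have key: "v \<mu> (p \<nu>) = (if \<mu> = \<nu> then 1 else 0)" if mu: "\<mu> < ?m" and nu: "\<nu> < ?m" for \<mu> \<nu>
  proof -
    let ?J = "(p \<nu>)(l := \<mu>)"
    have Jbox: "?J \<in> idxs d n"
      unfolding idxs_def PiE_iff extensional_def mem_Collect_eq
    proof (intro conjI ballI allI impI)
      fix x assume x: "x \<in> {1..d}"
      then show "?J x \<in> {..<n x}" using comp_lt_n[OF amAL[OF nu] x] mu mn by (auto simp: p_def)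
    next
      fix x assume "x \<notin> {1..d}"
      then show "?J x = undefined" using l by (auto simp: p_def)
    qed
    show ?thesis
    proof (cases "\<mu> = \<nu>")
      case True
      have "\<forall>x\<in>{1..d}. ?J x = tt_comp d s (am \<nu>) x" using True amc[OF nu] by (auto simp: p_def)
      then show ?thesis using True ttT_val2[OF Jbox] amAL[OF nu] by (auto simp: v_def)
    next
      case False
      have "\<not> (\<exists>\<alpha>\<in>AL. \<forall>x\<in>{1..d}. ?J x = tt_comp d s \<alpha> x)"
      proof
        assume "\<exists>\<alpha>\<in>AL. \<forall>x\<in>{1..d}. ?J x = tt_comp d s \<alpha> x"
        then obtain \<alpha> where a: "\<alpha> \<in> AL" "\<forall>x\<in>{1..d}. ?J x = tt_comp d s \<alpha> x" by blast
        have "\<forall>x\<in>{1..d} - {l}. tt_comp d s \<alpha> x = tt_comp d s (am \<nu>) x"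
        proof
          fix x assume x: "x \<in> {1..d} - {l}"
          then have "?J x = tt_comp d s (am \<nu>) x" by (auto simp: p_def)
          moreover have "?J x = tt_comp d s \<alpha> x" using a(2) x by blast
          ultimately show "tt_comp d s \<alpha> x = tt_comp d s (am \<nu>) x" by simp
        qed
        then have "\<alpha> = am \<nu>" using comp_inj_except[OF a(1) amAL[OF nu]] by blast
        moreover have "?J l = tt_comp d s \<alpha> l" using a(2) l by blast
        ultimately have "?J l = \<nu>" using amc[OF nu] by simp
        then show False using False by simp
      qed
      then show ?thesis using False ttT_val2[OF Jbox] by (simp add: v_def)
    qed
  qed
  show ?thesis unfolding ml_rank_fv
  proof (rule fv_rank_ge[of ?m v p])
    fix lam assume H: "\<forall>\<nu><?m. (\<Sum>\<mu><?m. lam \<mu> * v \<mu> (p \<nu>)) = 0"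
    show "\<forall>\<mu><?m. lam \<mu> = 0"
    proof (intro allI impI)
      fix \<mu> assume mu: "\<mu> < ?m"
      have "(\<Sum>\<mu>'<?m. lam \<mu>' * v \<mu>' (p \<mu>)) = (\<Sum>\<mu>'<?m. if \<mu>' = \<mu> then lam \<mu>' else 0)"
      proof (rule sum.cong[OF refl])
        fix x assume "x \<in> {..<?m}"
        then show "lam x * v x (p \<mu>) = (if x = \<mu> then lam x else 0)" using key[of x \<mu>] mu by auto
      qed
      also have "\<dots> = lam \<mu>" using mu by (simp add: sum.delta)
      finally show "lam \<mu> = 0" using H mu by simp
    qed
  next
    show "v ` {..<?m} \<subseteq> (\<lambda>a c. ttT d n s (c(l := a))) ` {..<n l}"
      using mn by (auto simp: v_def)
  qed simp
qed

definition ttcond :: "nat \<Rightarrow> (nat \<Rightarrow> nat) \<Rightarrow> bool" where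
  "ttcond i c \<longleftrightarrow> (\<forall>x\<in>{i+1..d}. c x < n x) \<and> (\<forall>x. d < x \<longrightarrow> c x = undefined)"

lemma merge_box_iff:
  assumes r: "r \<in> Pi\<^sub>E {1..i} (\<lambda>k. {..<n k})" and i: "i \<le> d"
  shows "merge_idx i r c \<in> idxs d n \<longleftrightarrow> ttcond i c"
proof
  assume H: "merge_idx i r c \<in> idxs d n"
  show "ttcond i c" unfolding ttcond_def
  proof (intro conjI ballI allI impI)
    fix x assume x: "x \<in> {i+1..d}"
    then have "merge_idx i r c x < n x" using idxs_mem[OF H, of x] by auto
    then show "c x < n x" using x by (simp add: merge_idx_def)
  next
    fix x assume x: "d < x"
    then have "merge_idx i r c x = undefined" using H by (auto simp: idxs_def PiE_def extensional_def)
    then show "c x = undefined" using x i by (simp add: merge_idx_def)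
  qed
next
  assume H: "ttcond i c"
  show "merge_idx i r c \<in> idxs d n"
    unfolding idxs_def PiE_iff extensional_def mem_Collect_eq
  proof (intro conjI ballI allI impI)
    fix x assume x: "x \<in> {1..d}"
    then show "merge_idx i r c x \<in> {..<n x}" using H r by (cases "x \<le> i") (auto simp: merge_idx_def ttcond_def PiE_iff)
  next
    fix x assume x: "x \<notin> {1..d}"
    show "merge_idx i r c x = undefined"
    proof (cases "x = 0")
      case True then show ?thesis using r by (auto simp: merge_idx_def PiE_def extensional_def)
    next
      case False then have "d < x" using x by auto
      then show ?thesis using H i by (auto simp: merge_idx_def ttcond_def)
    qed
  qed
qed

lemma comp_merge_low:
  assumes "l \<le> i" "i < d"
  shows "tt_comp d s (merge_idx i a1 a2) l = tt_comp d s a1 l"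
  using assms by (auto simp: tt_comp_def iota_def merge_idx_def)

lemma comp_merge_high:
  assumes "i < l" "l \<le> d" "1 \<le> i"
  shows "tt_comp d s (merge_idx i a1 a2) l = tt_comp d s (a2(i := a1 i)) l"
  using assms by (auto simp: tt_comp_def iota_def merge_idx_def)

lemma tt_upper_act:
  assumes i: "i \<in> {1..d-1}"
  shows "tt_rank_i d n (act d n g (ttT d n s)) i \<le> s i"
proof -
  define W where "W = (\<lambda>\<gamma> c. if ttcond i c then (\<Sum>a2\<in>Pi\<^sub>E {i+1..d-1} (\<lambda>k. {..<s k}).
        \<Prod>l\<in>{i+1..d}. g l (c l) (tt_comp d s (a2(i := \<gamma>)) l)) else 0)"
  define P where "P = (\<lambda>r a1. \<Prod>l\<in>{1..i}. g l (r l) (tt_comp d s a1 l))"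
  have row: "(\<lambda>c. act d n g (ttT d n s) (merge_idx i r c)) =
        (\<lambda>c. \<Sum>a1\<in>Pi\<^sub>E {1..i} (\<lambda>k. {..<s k}). P r a1 * W (a1 i) c)"
    if r: "r \<in> Pi\<^sub>E {1..i} (\<lambda>k. {..<n k})" for r
  proof
    fix c
    show "act d n g (ttT d n s) (merge_idx i r c) = (\<Sum>a1\<in>Pi\<^sub>E {1..i} (\<lambda>k. {..<s k}). P r a1 * W (a1 i) c)"
    proof (cases "ttcond i c")
      case True
      then have box: "merge_idx i r c \<in> idxs d n" using merge_box_iff[OF r] i by auto
      have "act d n g (ttT d n s) (merge_idx i r c) =
          (\<Sum>\<alpha>\<in>AL. \<Prod>l\<in>{1..d}. g l (merge_idx i r c l) (tt_comp d s \<alpha> l))" by (rule act_ttT[OF box])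
      also have "\<dots> = (\<Sum>a1\<in>Pi\<^sub>E {1..i} (\<lambda>k. {..<s k}). \<Sum>a2\<in>Pi\<^sub>E {i+1..d-1} (\<lambda>k. {..<s k}).
          \<Prod>l\<in>{1..d}. g l (merge_idx i r c l) (tt_comp d s (merge_idx i a1 a2) l))"
        unfolding AL_def by (rule sum_PiE_split) (use i in auto)
      also have "\<dots> = (\<Sum>a1\<in>Pi\<^sub>E {1..i} (\<lambda>k. {..<s k}). \<Sum>a2\<in>Pi\<^sub>E {i+1..d-1} (\<lambda>k. {..<s k}).
          P r a1 * (\<Prod>l\<in>{i+1..d}. g l (c l) (tt_comp d s (a2(i := a1 i)) l)))"
      proof (intro sum.cong refl)
        fix a1 a2
        have "(\<Prod>l\<in>{1..d}. g l (merge_idx i r c l) (tt_comp d s (merge_idx i a1 a2) l)) =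
          (\<Prod>l\<in>{1..i}. g l (merge_idx i r c l) (tt_comp d s (merge_idx i a1 a2) l)) *
          (\<Prod>l\<in>{i+1..d}. g l (merge_idx i r c l) (tt_comp d s (merge_idx i a1 a2) l))"
          by (rule prod_split_at) (use i in auto)
        also have "(\<Prod>l\<in>{1..i}. g l (merge_idx i r c l) (tt_comp d s (merge_idx i a1 a2) l)) = P r a1"
          unfolding P_def
        proof (intro prod.cong refl)
          fix l assume l: "l \<in> {1..i}"
          have "tt_comp d s (merge_idx i a1 a2) l = tt_comp d s a1 l" using l i by (intro comp_merge_low) auto
          moreover have "merge_idx i r c l = r l" using l by (simp add: merge_idx_def)
          ultimately show "g l (merge_idx i r c l) (tt_comp d s (merge_idx i a1 a2) l) = g l (r l) (tt_comp d s a1 l)" by simp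
        qed
        also have "(\<Prod>l\<in>{i+1..d}. g l (merge_idx i r c l) (tt_comp d s (merge_idx i a1 a2) l)) =
             (\<Prod>l\<in>{i+1..d}. g l (c l) (tt_comp d s (a2(i := a1 i)) l))"
        proof (intro prod.cong refl)
          fix l assume l: "l \<in> {i+1..d}"
          have "tt_comp d s (merge_idx i a1 a2) l = tt_comp d s (a2(i := a1 i)) l" using l i by (intro comp_merge_high) auto
          moreover have "merge_idx i r c l = c l" using l by (simp add: merge_idx_def)
          ultimately show "g l (merge_idx i r c l) (tt_comp d s (merge_idx i a1 a2) l) = g l (c l) (tt_comp d s (a2(i := a1 i)) l)" by simp
        qed
        finally show "(\<Prod>l\<in>{1..d}. g l (merge_idx i r c l) (tt_comp d s (merge_idx i a1 a2) l)) =
          P r a1 * (\<Prod>l\<in>{i+1..d}. g l (c l) (tt_comp d s (a2(i := a1 i)) l))" .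
      qed
      also have "\<dots> = (\<Sum>a1\<in>Pi\<^sub>E {1..i} (\<lambda>k. {..<s k}). P r a1 * W (a1 i) c)"
        using True by (simp add: W_def sum_distrib_left)
      finally show ?thesis .
    next
      case False
      then have "merge_idx i r c \<notin> idxs d n" using merge_box_iff[OF r] i by auto
      then show ?thesis using False by (simp add: act_def W_def)
    qed
  qed
  have sub: "(\<lambda>r c. act d n g (ttT d n s) (merge_idx i r c)) ` (\<Pi>\<^sub>E k\<in>{1..i}. {..<n k}) \<subseteq> fv.span (W ` {..<s i})"
  proof
    fix f assume "f \<in> (\<lambda>r c. act d n g (ttT d n s) (merge_idx i r c)) ` (\<Pi>\<^sub>E k\<in>{1..i}. {..<n k})"
    then obtain r where r: "r \<in> (\<Pi>\<^sub>E k\<in>{1..i}. {..<n k})" "f = (\<lambda>c. act d n g (ttT d n s) (merge_idx i r c))" by auto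
    have "(\<lambda>c. \<Sum>a1\<in>Pi\<^sub>E {1..i} (\<lambda>k. {..<s k}). P r a1 * W (a1 i) c) \<in> fv.span (W ` {..<s i})"
    proof (rule fv_span_sumI)
      show "finite (Pi\<^sub>E {1..i} (\<lambda>k. {..<s k}))" by (rule finite_PiE) auto
    next
      fix a1 assume "a1 \<in> Pi\<^sub>E {1..i} (\<lambda>k. {..<s k})"
      then have "a1 i < s i" using i by (auto simp: PiE_iff)
      then show "W (a1 i) \<in> fv.span (W ` {..<s i})" by (intro fv.span_base) auto
    qed
    then show "f \<in> fv.span (W ` {..<s i})" using r row by simp
  qed
  have "tt_rank_i d n (act d n g (ttT d n s)) i \<le> card (W ` {..<s i})"
    unfolding tt_rank_fv using fv.dim_le_card[OF sub] by simp
  also have "\<dots> \<le> s i" using card_image_le[of "{..<s i}" W] by simp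
  finally show ?thesis .
qed

definition mlcond :: "nat \<Rightarrow> (nat \<Rightarrow> nat) \<Rightarrow> bool" where
  "mlcond l c \<longleftrightarrow> (\<forall>x\<in>{1..d}-{l}. c x < n x) \<and> (\<forall>x. x \<notin> {1..d} \<longrightarrow> c x = undefined)"

lemma upd_box_iff:
  assumes l: "l \<in> {1..d}" and a: "a < n l"
  shows "c(l := a) \<in> idxs d n \<longleftrightarrow> mlcond l c"
proof
  assume H: "c(l := a) \<in> idxs d n"
  show "mlcond l c" unfolding mlcond_def
  proof (intro conjI ballI allI impI)
    fix x assume x: "x \<in> {1..d} - {l}"
    then show "c x < n x" using idxs_mem[OF H, of x] by auto
  next
    fix x assume x: "x \<notin> {1..d}"
    then show "c x = undefined" using H l by (auto simp: idxs_def PiE_def extensional_def split: if_splits)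
  qed
next
  assume H: "mlcond l c"
  show "c(l := a) \<in> idxs d n"
    unfolding idxs_def PiE_iff extensional_def mem_Collect_eq using H a l by (auto simp: mlcond_def)
qed

definition Tr :: "(nat \<Rightarrow> nat \<Rightarrow> nat \<Rightarrow> real) \<Rightarrow> nat \<Rightarrow> (nat \<Rightarrow> real) set" where
  "Tr g l = (\<lambda>a b. if b < s (l - 1) * s l then g l a b else 0) ` {..<n l}"

lemma Tr_dim: "fv.dim (Tr g l) \<le> s (l - 1) * s l"
proof -
  let ?m = "s (l - 1) * s l"
  have "Tr g l \<subseteq> fv.span (ebasis ` {..<?m})"
  proof
    fix f assume "f \<in> Tr g l"
    then obtain a where f: "f = (\<lambda>b. if b < ?m then g l a b else 0)" by (auto simp: Tr_def)
    have "f = (\<lambda>b. \<Sum>b'<?m. g l a b' * ebasis b' b)"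
    proof
      fix b
      have "(\<Sum>b'<?m. g l a b' * ebasis b' b) = (\<Sum>b'<?m. if b' = b then g l a b' else 0)"
        by (rule sum.cong) (auto simp: ebasis_def)
      then show "f b = (\<Sum>b'<?m. g l a b' * ebasis b' b)" using f by (simp add: sum.delta')
    qed
    moreover have "(\<lambda>b. \<Sum>b'<?m. g l a b' * ebasis b' b) \<in> fv.span (ebasis ` {..<?m})"
      by (rule fv_span_sumI) (auto intro: fv.span_base)
    ultimately show "f \<in> fv.span (ebasis ` {..<?m})" by simp
  qed
  then have "fv.dim (Tr g l) \<le> card (ebasis ` {..<?m})" using fv.dim_le_card by blast
  also have "\<dots> \<le> ?m" using card_image_le[of "{..<?m}" ebasis] by simp
  finally show ?thesis .
qed

lemma finite_Tr: "finite (Tr g l)" by (simp add: Tr_def)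

lemma ml_upper_act:
  assumes l: "l \<in> {1..d}"
  shows "ml_rank_i d n (act d n g (ttT d n s)) l \<le> fv.dim (Tr g l)"
proof -
  let ?m = "s (l - 1) * s l"
  define H where "H = (\<lambda>\<alpha> c. if mlcond l c then \<Prod>x\<in>{1..d}-{l}. g x (c x) (tt_comp d s \<alpha> x) else 0)"
  define Lg :: "(nat \<Rightarrow> real) \<Rightarrow> ((nat \<Rightarrow> nat) \<Rightarrow> real)" where
    "Lg = (\<lambda>v c. \<Sum>\<alpha>\<in>AL. v (tt_comp d s \<alpha> l) * H \<alpha> c)"
  have lin: "Vector_Spaces.linear (\<lambda>a (f::nat\<Rightarrow>real) x. a * f x) (\<lambda>a (f::(nat\<Rightarrow>nat)\<Rightarrow>real) x. a * f x) Lg"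
    by (rule lin_fvI) (auto simp: Lg_def fun_eq_iff sum.distrib sum_distrib_left algebra_simps)
  have row: "(\<lambda>c. act d n g (ttT d n s) (c(l := a))) = Lg (\<lambda>b. if b < ?m then g l a b else 0)"
    if a: "a < n l" for a
  proof
    fix c
    show "act d n g (ttT d n s) (c(l := a)) = Lg (\<lambda>b. if b < ?m then g l a b else 0) c"
    proof (cases "mlcond l c")
      case True
      then have box: "c(l := a) \<in> idxs d n" using upd_box_iff[OF l a] by simp
      have "act d n g (ttT d n s) (c(l := a)) = (\<Sum>\<alpha>\<in>AL. \<Prod>x\<in>{1..d}. g x ((c(l := a)) x) (tt_comp d s \<alpha> x))"
        by (rule act_ttT[OF box])
      also have "\<dots> = (\<Sum>\<alpha>\<in>AL. (if tt_comp d s \<alpha> l < ?m then g l a (tt_comp d s \<alpha> l) else 0) * H \<alpha> c)"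
      proof (rule sum.cong[OF refl])
        fix \<alpha> assume al: "\<alpha> \<in> AL"
        have "(\<Prod>x\<in>{1..d}. g x ((c(l := a)) x) (tt_comp d s \<alpha> x)) =
            g l a (tt_comp d s \<alpha> l) * (\<Prod>x\<in>{1..d}-{l}. g x ((c(l := a)) x) (tt_comp d s \<alpha> x))"
          using l by (simp add: prod.remove)
        also have "(\<Prod>x\<in>{1..d}-{l}. g x ((c(l := a)) x) (tt_comp d s \<alpha> x)) = H \<alpha> c"
          using True by (auto simp: H_def intro!: prod.cong)
        finally show "(\<Prod>x\<in>{1..d}. g x ((c(l := a)) x) (tt_comp d s \<alpha> x)) =
            (if tt_comp d s \<alpha> l < ?m then g l a (tt_comp d s \<alpha> l) else 0) * H \<alpha> c"
          using comp_lt[OF al l] by simp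
      qed
      finally show ?thesis by (simp add: Lg_def)
    next
      case False
      then have "c(l := a) \<notin> idxs d n" using upd_box_iff[OF l a] by simp
      then show ?thesis using False by (simp add: act_def Lg_def H_def)
    qed
  qed
  have sub: "(\<lambda>a c. act d n g (ttT d n s) (c(l := a))) ` {..<n l} \<subseteq> fv.span (Lg ` Tr g l)"
  proof
    fix f assume "f \<in> (\<lambda>a c. act d n g (ttT d n s) (c(l := a))) ` {..<n l}"
    then obtain a where a: "a < n l" "f = (\<lambda>c. act d n g (ttT d n s) (c(l := a)))" by auto
    then have "f = Lg (\<lambda>b. if b < ?m then g l a b else 0)" using row by simp
    moreover have "(\<lambda>b. if b < ?m then g l a b else 0) \<in> Tr g l" using a by (auto simp: Tr_def)
    ultimately show "f \<in> fv.span (Lg ` Tr g l)" by (auto intro: fv.span_base)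
  qed
  show ?thesis unfolding ml_rank_fv by (rule fv_dim_image_le[OF lin finite_Tr sub])
qed

end

context tts begin

lemma tt_mono_act:
  assumes T: "T \<in> tensors d n" and i: "i \<in> {1..d-1}"
  shows "tt_rank_i d n (act d n g T) i \<le> tt_rank_i d n T i"
proof -
  let ?R = "Pi\<^sub>E {1..i} (\<lambda>k. {..<n k})"
  define Lt :: "((nat\<Rightarrow>nat)\<Rightarrow>real) \<Rightarrow> ((nat\<Rightarrow>nat)\<Rightarrow>real)" where
    "Lt = (\<lambda>f c. if ttcond i c then (\<Sum>k2\<in>Pi\<^sub>E {i+1..d} (\<lambda>k. {..<n k}). (\<Prod>x\<in>{i+1..d}. g x (c x) (k2 x)) * f k2) else 0)"
  have lin: "Vector_Spaces.linear (\<lambda>a (f::(nat\<Rightarrow>nat)\<Rightarrow>real) x. a * f x) (\<lambda>a (f::(nat\<Rightarrow>nat)\<Rightarrow>real) x. a * f x) Lt"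
    by (rule lin_fvI) (auto simp: Lt_def fun_eq_iff sum.distrib sum_distrib_left algebra_simps)
  have row: "(\<lambda>c. act d n g T (merge_idx i r c)) =
     (\<lambda>c. \<Sum>k1\<in>?R. (\<Prod>x\<in>{1..i}. g x (r x) (k1 x)) * Lt (\<lambda>c'. T (merge_idx i k1 c')) c)"
    if r: "r \<in> ?R" for r
  proof
    fix c
    show "act d n g T (merge_idx i r c) = (\<Sum>k1\<in>?R. (\<Prod>x\<in>{1..i}. g x (r x) (k1 x)) * Lt (\<lambda>c'. T (merge_idx i k1 c')) c)"
    proof (cases "ttcond i c")
      case True
      then have box: "merge_idx i r c \<in> idxs d n" using merge_box_iff[OF r] i by auto
      have "act d n g T (merge_idx i r c) = (\<Sum>k\<in>Pi\<^sub>E {1..d} (\<lambda>k. {..<n k}). (\<Prod>x\<in>{1..d}. g x (merge_idx i r c x) (k x)) * T k)"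
        using box by (simp add: act_def idxs_def)
      also have "\<dots> = (\<Sum>k1\<in>?R. \<Sum>k2\<in>Pi\<^sub>E {i+1..d} (\<lambda>k. {..<n k}).
           (\<Prod>x\<in>{1..d}. g x (merge_idx i r c x) (merge_idx i k1 k2 x)) * T (merge_idx i k1 k2))"
        by (rule sum_PiE_split) (use i in auto)
      also have "\<dots> = (\<Sum>k1\<in>?R. \<Sum>k2\<in>Pi\<^sub>E {i+1..d} (\<lambda>k. {..<n k}).
           (\<Prod>x\<in>{1..i}. g x (r x) (k1 x)) * ((\<Prod>x\<in>{i+1..d}. g x (c x) (k2 x)) * T (merge_idx i k1 k2)))"
      proof (intro sum.cong refl)
        fix k1 k2
        have "(\<Prod>x\<in>{1..d}. g x (merge_idx i r c x) (merge_idx i k1 k2 x)) =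
           (\<Prod>x\<in>{1..i}. g x (merge_idx i r c x) (merge_idx i k1 k2 x)) * (\<Prod>x\<in>{i+1..d}. g x (merge_idx i r c x) (merge_idx i k1 k2 x))"
          by (rule prod_split_at) (use i in auto)
        also have "\<dots> = (\<Prod>x\<in>{1..i}. g x (r x) (k1 x)) * (\<Prod>x\<in>{i+1..d}. g x (c x) (k2 x))"
          by (intro arg_cong2[where f="(*)"] prod.cong refl) (auto simp: merge_idx_def)
        finally show "(\<Prod>x\<in>{1..d}. g x (merge_idx i r c x) (merge_idx i k1 k2 x)) * T (merge_idx i k1 k2) =
           (\<Prod>x\<in>{1..i}. g x (r x) (k1 x)) * ((\<Prod>x\<in>{i+1..d}. g x (c x) (k2 x)) * T (merge_idx i k1 k2))" by simp
      qed
      also have "\<dots> = (\<Sum>k1\<in>?R. (\<Prod>x\<in>{1..i}. g x (r x) (k1 x)) * Lt (\<lambda>c'. T (merge_idx i k1 c')) c)"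
        using True by (simp add: Lt_def sum_distrib_left)
      finally show ?thesis .
    next
      case False
      then have "merge_idx i r c \<notin> idxs d n" using merge_box_iff[OF r] i by auto
      then show ?thesis using False by (simp add: act_def Lt_def)
    qed
  qed
  have sub: "(\<lambda>r c. act d n g T (merge_idx i r c)) ` ?R \<subseteq> fv.span (Lt ` ((\<lambda>r c. T (merge_idx i r c)) ` ?R))"
  proof
    fix f assume "f \<in> (\<lambda>r c. act d n g T (merge_idx i r c)) ` ?R"
    then obtain r where r: "r \<in> ?R" "f = (\<lambda>c. act d n g T (merge_idx i r c))" by auto
    have "(\<lambda>c. \<Sum>k1\<in>?R. (\<Prod>x\<in>{1..i}. g x (r x) (k1 x)) * Lt (\<lambda>c'. T (merge_idx i k1 c')) c)
        \<in> fv.span (Lt ` ((\<lambda>r c. T (merge_idx i r c)) ` ?R))"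
      by (rule fv_span_sumI) (auto intro!: fv.span_base finite_PiE)
    then show "f \<in> fv.span (Lt ` ((\<lambda>r c. T (merge_idx i r c)) ` ?R))" using r row by simp
  qed
  show ?thesis unfolding tt_rank_fv by (rule fv_dim_image_le[OF lin finite_ttrows sub])
qed

lemma ml_mono_act:
  assumes T: "T \<in> tensors d n" and l: "l \<in> {1..d}"
  shows "ml_rank_i d n (act d n g T) l \<le> ml_rank_i d n T l"
proof -
  let ?K = "Pi\<^sub>E ({1..d} - {l}) (\<lambda>k. {..<n k})"
  define Lm :: "((nat\<Rightarrow>nat)\<Rightarrow>real) \<Rightarrow> ((nat\<Rightarrow>nat)\<Rightarrow>real)" where
    "Lm = (\<lambda>f c. if mlcond l c then (\<Sum>k'\<in>?K. (\<Prod>x\<in>{1..d}-{l}. g x (c x) (k' x)) * f k') else 0)"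
  have lin: "Vector_Spaces.linear (\<lambda>a (f::(nat\<Rightarrow>nat)\<Rightarrow>real) x. a * f x) (\<lambda>a (f::(nat\<Rightarrow>nat)\<Rightarrow>real) x. a * f x) Lm"
    by (rule lin_fvI) (auto simp: Lm_def fun_eq_iff sum.distrib sum_distrib_left algebra_simps)
  have row: "(\<lambda>c. act d n g T (c(l := a))) = (\<lambda>c. \<Sum>b<n l. g l a b * Lm (\<lambda>c'. T (c'(l := b))) c)"
    if a: "a < n l" for a
  proof
    fix c
    show "act d n g T (c(l := a)) = (\<Sum>b<n l. g l a b * Lm (\<lambda>c'. T (c'(l := b))) c)"
    proof (cases "mlcond l c")
      case True
      then have box: "c(l := a) \<in> idxs d n" using upd_box_iff[OF l a] by simp
      have "act d n g T (c(l := a)) = (\<Sum>k\<in>Pi\<^sub>E {1..d} (\<lambda>k. {..<n k}). (\<Prod>x\<in>{1..d}. g x ((c(l := a)) x) (k x)) * T k)"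
        using box by (simp add: act_def idxs_def)
      also have "\<dots> = (\<Sum>b\<in>{..<n l}. \<Sum>k'\<in>?K. (\<Prod>x\<in>{1..d}. g x ((c(l := a)) x) ((k'(l := b)) x)) * T (k'(l := b)))"
        by (rule sum_PiE_upd) (use l in auto)
      also have "\<dots> = (\<Sum>b\<in>{..<n l}. \<Sum>k'\<in>?K. g l a b * ((\<Prod>x\<in>{1..d}-{l}. g x (c x) (k' x)) * T (k'(l := b))))"
      proof (intro sum.cong refl)
        fix b k'
        have "(\<Prod>x\<in>{1..d}. g x ((c(l := a)) x) ((k'(l := b)) x)) =
            g l a b * (\<Prod>x\<in>{1..d}-{l}. g x ((c(l := a)) x) ((k'(l := b)) x))"
          using l by (simp add: prod.remove)
        also have "(\<Prod>x\<in>{1..d}-{l}. g x ((c(l := a)) x) ((k'(l := b)) x)) = (\<Prod>x\<in>{1..d}-{l}. g x (c x) (k' x))"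
          by (rule prod.cong) auto
        finally show "(\<Prod>x\<in>{1..d}. g x ((c(l := a)) x) ((k'(l := b)) x)) * T (k'(l := b)) =
            g l a b * ((\<Prod>x\<in>{1..d}-{l}. g x (c x) (k' x)) * T (k'(l := b)))" by simp
      qed
      also have "\<dots> = (\<Sum>b<n l. g l a b * Lm (\<lambda>c'. T (c'(l := b))) c)"
        using True by (simp add: Lm_def sum_distrib_left)
      finally show ?thesis .
    next
      case False
      then have "c(l := a) \<notin> idxs d n" using upd_box_iff[OF l a] by simp
      then show ?thesis using False by (simp add: act_def Lm_def)
    qed
  qed
  have sub: "(\<lambda>a c. act d n g T (c(l := a))) ` {..<n l} \<subseteq> fv.span (Lm ` ((\<lambda>a c. T (c(l := a))) ` {..<n l}))"
  proof
    fix f assume "f \<in> (\<lambda>a c. act d n g T (c(l := a))) ` {..<n l}"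
    then obtain a where a: "a < n l" "f = (\<lambda>c. act d n g T (c(l := a)))" by auto
    have "(\<lambda>c. \<Sum>b<n l. g l a b * Lm (\<lambda>c'. T (c'(l := b))) c) \<in> fv.span (Lm ` ((\<lambda>a c. T (c(l := a))) ` {..<n l}))"
      by (rule fv_span_sumI) (auto intro!: fv.span_base)
    then show "f \<in> fv.span (Lm ` ((\<lambda>a c. T (c(l := a))) ` {..<n l}))" using a row by simp
  qed
  show ?thesis unfolding ml_rank_fv by (rule fv_dim_image_le[OF lin _ sub]) simp
qed

end

definition JM :: "(nat \<Rightarrow> nat \<Rightarrow> real) \<Rightarrow> nat \<Rightarrow> real Matrix.mat" where
  "JM A k = Matrix.mat k k (\<lambda>(i, j). A i j)"

lemma JM_carrier: "JM A k \<in> carrier_mat k k" by (simp add: JM_def)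

lemma JM_dims[simp]: "dim_row (JM A k) = k" "dim_col (JM A k) = k" by (simp_all add: JM_def)

lemma JM_mult_vec: "i < k \<Longrightarrow> (JM A k *\<^sub>v v) $ i = (\<Sum>j<k. A i j * v $ j)" if "dim_vec v = k"
  using that by (simp add: JM_def scalar_prod_def Matrix.row_def atLeast0LessThan)

lemma jnf_det_inj:
  fixes A :: "nat \<Rightarrow> nat \<Rightarrow> real"
  shows "Determinant.det (JM A k) \<noteq> 0 \<longleftrightarrow> (\<forall>x. (\<forall>i<k. (\<Sum>j<k. A i j * x j) = 0) \<longrightarrow> (\<forall>j<k. x j = 0))"
proof
  assume det: "Determinant.det (JM A k) \<noteq> 0"
  show "\<forall>x. (\<forall>i<k. (\<Sum>j<k. A i j * x j) = 0) \<longrightarrow> (\<forall>j<k. x j = 0)"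
  proof (rule allI, rule impI)
    fix x assume H: "\<forall>i<k. (\<Sum>j<k. A i j * x j) = 0"
    let ?v = "Matrix.vec k x"
    have "JM A k *\<^sub>v ?v = 0\<^sub>v k"
    proof (rule eq_vecI)
      fix i assume "i < dim_vec (0\<^sub>v k)"
      then have i: "i < k" by simp
      show "(JM A k *\<^sub>v ?v) $ i = 0\<^sub>v k $ i" using JM_mult_vec[of ?v k i A] H i by simp
    qed simp
    moreover have "\<not> (\<exists>v. v \<in> carrier_vec k \<and> v \<noteq> 0\<^sub>v k \<and> JM A k *\<^sub>v v = 0\<^sub>v k)"
      using det det_0_iff_vec_prod_zero[OF JM_carrier[of A k]] by simp
    moreover have "?v \<in> carrier_vec k" by simp
    ultimately have "?v = 0\<^sub>v k" by metis
    then show "\<forall>j<k. x j = 0" by (metis index_vec index_zero_vec(1))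
  qed
next
  assume H: "\<forall>x. (\<forall>i<k. (\<Sum>j<k. A i j * x j) = 0) \<longrightarrow> (\<forall>j<k. x j = 0)"
  show "Determinant.det (JM A k) \<noteq> 0"
  proof
    assume "Determinant.det (JM A k) = 0"
    then obtain v where v: "v \<in> carrier_vec k" "v \<noteq> 0\<^sub>v k" "JM A k *\<^sub>v v = 0\<^sub>v k"
      using det_0_iff_vec_prod_zero[OF JM_carrier[of A k]] by auto
    have dv: "dim_vec v = k" using v(1) by simp
    have "\<forall>i<k. (\<Sum>j<k. A i j * v $ j) = 0"
    proof (intro allI impI)
      fix i assume i: "i < k"
      have "(JM A k *\<^sub>v v) $ i = 0" using v(3) i by simp
      then show "(\<Sum>j<k. A i j * v $ j) = 0" using JM_mult_vec[OF dv i] by simp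
    qed
    then have "\<forall>j<k. v $ j = 0" using H by blast
    then have "v = 0\<^sub>v k" by (intro eq_vecI) (auto simp: dv)
    then show False using v(2) by simp
  qed
qed

lemma inj_GLn:
  fixes A :: "nat \<Rightarrow> nat \<Rightarrow> real"
  assumes H: "\<forall>x. (\<forall>i<k. (\<Sum>j<k. A i j * x j) = 0) \<longrightarrow> (\<forall>j<k. x j = 0)"
  shows "A \<in> GLn k"
proof -
  have det: "Determinant.det (JM A k) \<noteq> 0" using H jnf_det_inj by blast
  have "JM A k \<in> Units (ring_mat TYPE(real) k ())"
    by (rule det_non_zero_imp_unit[OF JM_carrier det])
  then obtain B where B: "B \<in> carrier_mat k k" "B * JM A k = 1\<^sub>m k" "JM A k * B = 1\<^sub>m k"
    by (auto simp: Units_def ring_mat_def)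
  have e1: "(\<Sum>l<k. A r l * B $$ (l, c)) = (if r = c then 1 else 0)" if "r < k" "c < k" for r c
  proof -
    have "(JM A k * B) $$ (r, c) = (\<Sum>l<k. A r l * B $$ (l, c))"
      using that B(1) by (simp add: JM_def scalar_prod_def Matrix.row_def Matrix.col_def atLeast0LessThan)
    then show ?thesis using B(3) that by simp
  qed
  have e2: "(\<Sum>l<k. B $$ (r, l) * A l c) = (if r = c then 1 else 0)" if "r < k" "c < k" for r c
  proof -
    have "(B * JM A k) $$ (r, c) = (\<Sum>l<k. B $$ (r, l) * A l c)"
      using that B(1) by (simp add: JM_def scalar_prod_def Matrix.row_def Matrix.col_def atLeast0LessThan)
    then show ?thesis using B(2) that by simp
  qed
  show ?thesis unfolding GLn_def
    by (rule CollectI, rule exI[of _ "\<lambda>i j. B $$ (i, j)"]) (simp add: e1 e2)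
qed

lemma eig_finite:
  fixes A :: "nat \<Rightarrow> nat \<Rightarrow> real"
  shows "finite {t. \<not> (\<forall>x. (\<forall>i<k. (\<Sum>j<k. (A i j + t * (if i = j then 1 else 0)) * x j) = 0) \<longrightarrow> (\<forall>j<k. x j = 0))}"
proof -
  let ?p = "char_poly (JM A k)"
  have p0: "?p \<noteq> 0" using degree_monic_char_poly[OF JM_carrier[of A k]] by auto
  have "{t. \<not> (\<forall>x. (\<forall>i<k. (\<Sum>j<k. (A i j + t * (if i = j then 1 else 0)) * x j) = 0) \<longrightarrow> (\<forall>j<k. x j = 0))}
        \<subseteq> uminus ` {x. poly ?p x = 0}"
  proof
    fix t assume "t \<in> {t. \<not> (\<forall>x. (\<forall>i<k. (\<Sum>j<k. (A i j + t * (if i = j then 1 else 0)) * x j) = 0) \<longrightarrow> (\<forall>j<k. x j = 0))}"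
    then obtain x j0 where x: "\<forall>i<k. (\<Sum>j<k. (A i j + t * (if i = j then 1 else 0)) * x j) = 0" "j0 < k" "x j0 \<noteq> 0" by auto
    let ?v = "Matrix.vec k x"
    have ev: "JM A k *\<^sub>v ?v = (- t) \<cdot>\<^sub>v ?v"
    proof (rule eq_vecI)
      fix i assume "i < dim_vec ((- t) \<cdot>\<^sub>v ?v)"
      then have i: "i < k" by simp
      have "(\<Sum>j<k. (A i j + t * (if i = j then 1 else 0)) * x j) = (\<Sum>j<k. A i j * x j) + (\<Sum>j<k. if j = i then t * x j else 0)"
        by (subst sum.distrib[symmetric], rule sum.cong) (auto simp: algebra_simps)
      also have "\<dots> = (\<Sum>j<k. A i j * x j) + t * x i" using i by (simp add: sum.delta')
      finally have "(\<Sum>j<k. A i j * x j) = - t * x i" using x(1) i by simp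
      moreover have "(JM A k *\<^sub>v ?v) $ i = (\<Sum>j<k. A i j * ?v $ j)" by (rule JM_mult_vec) (use i in auto)
      ultimately show "(JM A k *\<^sub>v ?v) $ i = ((- t) \<cdot>\<^sub>v ?v) $ i" using i by simp
    qed simp
    have "?v \<noteq> 0\<^sub>v k"
    proof
      assume "?v = 0\<^sub>v k"
      then have "?v $ j0 = 0" using x(2) by simp
      then show False using x(2,3) by simp
    qed
    then have "eigenvalue (JM A k) (- t)"
      unfolding eigenvalue_def eigenvector_def using ev by (auto simp: JM_def intro!: exI[of _ ?v])
    then have "poly ?p (- t) = 0" using eigenvalue_root_char_poly[OF JM_carrier] by blast
    then show "t \<in> uminus ` {x. poly ?p x = 0}" by (auto intro!: image_eqI[of _ _ "- t"])
  qed
  moreover have "finite (uminus ` {x. poly ?p x = 0})" using poly_roots_finite[OF p0] by simp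
  ultimately show ?thesis using finite_subset by blast
qed

lemma inj_surj:
  fixes A :: "nat \<Rightarrow> nat \<Rightarrow> real"
  assumes H: "\<forall>x. (\<forall>i<k. (\<Sum>j<k. A i j * x j) = 0) \<longrightarrow> (\<forall>j<k. x j = 0)"
  shows "\<exists>x. \<forall>i<k. (\<Sum>j<k. A i j * x j) = y i"
proof -
  obtain B where B: "\<forall>r<k. \<forall>c<k. (\<Sum>l<k. A r l * B l c) = (if r = c then 1 else 0)"
    using inj_GLn[OF H] unfolding GLn_def by blast
  define x where "x = (\<lambda>j. \<Sum>l<k. B j l * y l)"
  have "(\<Sum>j<k. A i j * x j) = y i" if i: "i < k" for i
  proof -
    have "(\<Sum>j<k. A i j * x j) = (\<Sum>l<k. (\<Sum>j<k. A i j * B j l) * y l)"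
      unfolding x_def by (simp add: sum_distrib_left sum_distrib_right mult.assoc) (rule sum.swap)
    also have "\<dots> = (\<Sum>l<k. if l = i then y l else 0)"
      by (rule sum.cong) (use B i in auto)
    also have "\<dots> = y i" using i by (simp add: sum.delta')
    finally show ?thesis .
  qed
  then show ?thesis by blast
qed

lemma indep_points:
  fixes v :: "nat \<Rightarrow> 'c \<Rightarrow> real"
  assumes "\<forall>lam. (\<forall>c. (\<Sum>\<mu><k. lam \<mu> * v \<mu> c) = 0) \<longrightarrow> (\<forall>\<mu><k. lam \<mu> = 0)"
  shows "\<exists>p. \<forall>lam. (\<forall>\<nu><k. (\<Sum>\<mu><k. lam \<mu> * v \<mu> (p \<nu>)) = 0) \<longrightarrow> (\<forall>\<mu><k. lam \<mu> = 0)"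
  using assms
proof (induction k)
  case 0
  then show ?case by simp
next
  case (Suc k)
  have hk: "\<forall>lam. (\<forall>c. (\<Sum>\<mu><k. lam \<mu> * v \<mu> c) = 0) \<longrightarrow> (\<forall>\<mu><k. lam \<mu> = 0)"
  proof (intro allI impI)
    fix lam \<mu> assume H: "\<forall>c. (\<Sum>\<mu><k. lam \<mu> * v \<mu> c) = 0" and mu: "\<mu> < k"
    let ?l = "\<lambda>\<mu>. if \<mu> < k then lam \<mu> else 0"
    have "\<forall>c. (\<Sum>\<mu><Suc k. ?l \<mu> * v \<mu> c) = 0" using H by simp
    then have "\<forall>\<mu><Suc k. ?l \<mu> = 0" by (rule Suc.prems[THEN spec, THEN mp])
    then show "lam \<mu> = 0" using mu by (metis less_SucI)
  qed
  obtain p where p: "\<forall>lam. (\<forall>\<nu><k. (\<Sum>\<mu><k. lam \<mu> * v \<mu> (p \<nu>)) = 0) \<longrightarrow> (\<forall>\<mu><k. lam \<mu> = 0)"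
    using Suc.IH[OF hk] by blast
  have injM: "\<forall>x. (\<forall>i<k. (\<Sum>j<k. v j (p i) * x j) = 0) \<longrightarrow> (\<forall>j<k. x j = 0)"
    using p by (simp add: mult.commute)
  obtain mu where mu: "\<forall>i<k. (\<Sum>j<k. v j (p i) * mu j) = v k (p i)"
    using inj_surj[OF injM, of "\<lambda>i. v k (p i)"] by blast
  define w where "w = (\<lambda>c. v k c - (\<Sum>\<mu><k. mu \<mu> * v \<mu> c))"
  have wp: "w (p \<nu>) = 0" if "\<nu> < k" for \<nu>
    using mu that by (simp add: w_def mult.commute)
  have "\<exists>c0. w c0 \<noteq> 0"
  proof (rule ccontr)
    assume "\<not> (\<exists>c0. w c0 \<noteq> 0)"
    then have w0: "\<forall>c. w c = 0" by simp
    let ?l = "\<lambda>\<mu>. if \<mu> < k then - mu \<mu> else (1::real)"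
    have "\<forall>c. (\<Sum>\<mu><Suc k. ?l \<mu> * v \<mu> c) = 0"
    proof
      fix c
      have "(\<Sum>\<mu><Suc k. ?l \<mu> * v \<mu> c) = (\<Sum>\<mu><k. - mu \<mu> * v \<mu> c) + v k c" by simp
      also have "\<dots> = w c" by (simp add: w_def sum_negf)
      finally show "(\<Sum>\<mu><Suc k. ?l \<mu> * v \<mu> c) = 0" using w0 by simp
    qed
    then have "\<forall>\<mu><Suc k. ?l \<mu> = 0" by (rule Suc.prems[THEN spec, THEN mp])
    then have "?l k = 0" by (drule_tac spec[of _ k]) simp
    then show False by simp
  qed
  then obtain c0 where c0: "w c0 \<noteq> 0" by blast
  define p' where "p' = p(k := c0)"
  have "\<forall>lam. (\<forall>\<nu><Suc k. (\<Sum>\<mu><Suc k. lam \<mu> * v \<mu> (p' \<nu>)) = 0) \<longrightarrow> (\<forall>\<mu><Suc k. lam \<mu> = 0)"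
  proof (rule allI, rule impI)
    fix lam assume H: "\<forall>\<nu><Suc k. (\<Sum>\<mu><Suc k. lam \<mu> * v \<mu> (p' \<nu>)) = 0"
    have decomp: "(\<Sum>\<mu><Suc k. lam \<mu> * v \<mu> c) = (\<Sum>\<mu><k. (lam \<mu> + lam k * mu \<mu>) * v \<mu> c) + lam k * w c" for c
      by (simp add: w_def algebra_simps sum.distrib sum_distrib_left)
    have "\<forall>\<nu><k. (\<Sum>\<mu><k. (lam \<mu> + lam k * mu \<mu>) * v \<mu> (p \<nu>)) = 0"
    proof (intro allI impI)
      fix \<nu> assume nu: "\<nu> < k"
      have "(\<Sum>\<mu><Suc k. lam \<mu> * v \<mu> (p' \<nu>)) = 0" using H nu by simp
      moreover have "p' \<nu> = p \<nu>" using nu by (simp add: p'_def)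
      ultimately show "(\<Sum>\<mu><k. (lam \<mu> + lam k * mu \<mu>) * v \<mu> (p \<nu>)) = 0" using decomp[of "p \<nu>"] wp[OF nu] by simp
    qed
    then have z: "\<forall>\<mu><k. lam \<mu> + lam k * mu \<mu> = 0" by (rule p[THEN spec, THEN mp])
    have "(\<Sum>\<mu><Suc k. lam \<mu> * v \<mu> (p' k)) = 0" using H by simp
    then have "lam k * w c0 = 0" using decomp[of c0] z by (simp add: p'_def)
    then have lk: "lam k = 0" using c0 by simp
    show "\<forall>\<mu><Suc k. lam \<mu> = 0"
    proof (intro allI impI)
      fix \<mu> assume "\<mu> < Suc k"
      then show "lam \<mu> = 0" using z lk by (cases "\<mu> = k") auto
    qed
  qed
  then show ?case by blast
qed

lemma fv_indep_coef:
  fixes B :: "('c \<Rightarrow> real) set"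
  assumes "fv.independent B" "finite B" "(\<Sum>v\<in>B. (\<lambda>x. u v * v x)) = 0" "v \<in> B"
  shows "u v = 0"
  using assms fv.dependent_finite[of B] by auto

lemma extend_GLn:
  fixes h :: "nat \<Rightarrow> nat \<Rightarrow> real"
  assumes mn: "m \<le> n" and ind: "\<forall>lam. (\<forall>a<n. (\<Sum>b<m. h a b * lam b) = 0) \<longrightarrow> (\<forall>b<m. lam b = 0)"
  shows "\<exists>g\<in>GLn n. \<forall>a<n. \<forall>b<m. g a b = h a b"
proof -
  define col where "col = (\<lambda>b a. if a < n then h a b else (0::real))"
  define S where "S = col ` {..<m}"
  define E where "E = ebasis ` {..<n}"
  have injc: "inj_on col {..<m}"
  proof (rule inj_onI, rule ccontr)
    fix i j assume ij: "i \<in> {..<m}" "j \<in> {..<m}" "col i = col j" "i \<noteq> j"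
    let ?l = "\<lambda>b. if b = i then (1::real) else if b = j then -1 else 0"
    have "\<forall>a<n. (\<Sum>b<m. h a b * ?l b) = 0"
    proof (intro allI impI)
      fix a assume a: "a < n"
      have "(\<Sum>b<m. h a b * ?l b) = (\<Sum>b\<in>{i,j}. h a b * ?l b)"
        by (rule sum.mono_neutral_right) (use ij in auto)
      also have "\<dots> = h a i - h a j" using ij by simp
      also have "\<dots> = 0" using fun_cong[OF ij(3), of a] a by (simp add: col_def)
      finally show "(\<Sum>b<m. h a b * ?l b) = 0" .
    qed
    then have "\<forall>b<m. ?l b = 0" by (rule ind[THEN spec, THEN mp])
    then have "?l i = 0" using ij by (drule_tac spec[of _ i]) simp
    then show False by simp
  qed
  have indS: "fv.independent S"
  proof (unfold S_def, rule fv.independent_if_scalars_zero)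
    show "finite (col ` {..<m})" by simp
    fix f x assume s: "(\<Sum>x\<in>col ` {..<m}. (\<lambda>t. f x * x t)) = 0" and x: "x \<in> col ` {..<m}"
    have s2: "(\<Sum>b<m. (\<lambda>t. f (col b) * col b t)) = 0" using s by (simp add: sum.reindex[OF injc])
    have "\<forall>a<n. (\<Sum>b<m. h a b * f (col b)) = 0"
    proof (intro allI impI)
      fix a assume a: "a < n"
      have "(\<Sum>b<m. (\<lambda>t. f (col b) * col b t)) a = 0" using s2 by simp
      then show "(\<Sum>b<m. h a b * f (col b)) = 0" using a by (simp add: sum_fun_apply col_def mult.commute)
    qed
    then have "\<forall>b<m. f (col b) = 0" by (rule ind[THEN spec, THEN mp])
    then show "f x = 0" using x by auto
  qed
  have injE: "inj_on ebasis {..<n}"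
    by (rule inj_onI) (metis ebasis_def zero_neq_one)
  have indE: "fv.independent E"
  proof (unfold E_def, rule fv.independent_if_scalars_zero)
    show "finite (ebasis ` {..<n})" by simp
    fix f x assume s: "(\<Sum>x\<in>ebasis ` {..<n}. (\<lambda>t. f x * x t)) = 0" and x: "x \<in> ebasis ` {..<n}"
    have s2: "(\<Sum>a<n. (\<lambda>t. f (ebasis a) * ebasis a t)) = 0" using s by (simp add: sum.reindex[OF injE])
    obtain a where a: "a < n" "x = ebasis a" using x by auto
    have "(\<Sum>a'<n. (\<lambda>t. f (ebasis a') * ebasis a' t)) a = 0" using s2 by simp
    then have "(\<Sum>a'<n. if a' = a then f (ebasis a') else 0) = 0"
      by (simp add: sum_fun_apply ebasis_def if_distrib cong: if_cong)
    then show "f x = 0" using a by (simp add: sum.delta')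
  qed
  have Esp: "col b \<in> fv.span E" for b
  proof -
    have "col b = (\<lambda>t. \<Sum>a<n. col b a * ebasis a t)"
    proof
      fix t
      have "(\<Sum>a<n. col b a * ebasis a t) = (\<Sum>a<n. if a = t then col b a else 0)"
        by (rule sum.cong) (auto simp: ebasis_def)
      then show "col b t = (\<Sum>a<n. col b a * ebasis a t)" by (simp add: sum.delta' col_def)
    qed
    moreover have "(\<lambda>t. \<Sum>a<n. col b a * ebasis a t) \<in> fv.span E"
      by (rule fv_span_sumI) (auto simp: E_def intro: fv.span_base)
    ultimately show ?thesis by simp
  qed
  obtain B where B: "S \<subseteq> B" "B \<subseteq> S \<union> E" "fv.independent B" "S \<union> E \<subseteq> fv.span B"
    using fv.maximal_independent_subset_extend[of S "S \<union> E"] indS by auto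
  have BspE: "B \<subseteq> fv.span E" using B(2) Esp by (auto simp: S_def intro: fv.span_base)
  have finE: "finite E" by (simp add: E_def)
  have cardE: "card E = n" using card_image[OF injE] by (simp add: E_def)
  have finB: "finite B" and cB1: "card B \<le> n"
    using fv.independent_span_bound[OF finE B(3) BspE] cardE by auto
  have "card E \<le> card B" using fv.independent_span_bound[OF finB indE] B(4) by auto
  then have cardB: "card B = n" using cB1 cardE by simp
  have cardS: "card S = m" using card_image[OF injc] by (simp add: S_def)
  have cBS: "card (B - S) = n - m" using cardB cardS B(1) finB by (simp add: card_Diff_subset finite_subset)
  obtain e where e: "bij_betw e {0..<n-m} (B - S)"
    using ex_bij_betw_nat_finite[of "B - S"] finB cBS by auto
  define cols where "cols = (\<lambda>b. if b < m then col b else e (b - m))"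
  define g where "g = (\<lambda>a b. cols b a)"
  have colsB: "cols ` {..<n} = B"
  proof (intro equalityI subsetI)
    fix f assume "f \<in> cols ` {..<n}"
    then obtain b where b: "b < n" "f = cols b" by auto
    show "f \<in> B"
    proof (cases "b < m")
      case True then show ?thesis using b B(1) by (auto simp: cols_def S_def)
    next
      case False then have "b - m \<in> {0..<n-m}" using b by auto
      then show ?thesis using b False bij_betw_apply[OF e] by (auto simp: cols_def)
    qed
  next
    fix f assume f: "f \<in> B"
    show "f \<in> cols ` {..<n}"
    proof (cases "f \<in> S")
      case True
      then obtain b where "b < m" "f = col b" by (auto simp: S_def)
      then show ?thesis using mn by (auto simp: cols_def intro!: image_eqI[of _ _ b])
    next
      case False
      then have "f \<in> e ` {0..<n-m}" using f e by (auto simp: bij_betw_def)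
      then obtain t where t: "t < n - m" "f = e t" by auto
      then show ?thesis by (auto simp: cols_def intro!: image_eqI[of _ _ "t + m"])
    qed
  qed
  have injcols: "inj_on cols {..<n}"
    using eq_card_imp_inj_on[of "{..<n}" cols] colsB cardB by simp
  have supp: "f a = 0" if "f \<in> B" "n \<le> a" for f a
    using that B(2) by (auto simp: S_def E_def col_def ebasis_def)
  have ginj: "\<forall>x. (\<forall>a<n. (\<Sum>b<n. g a b * x b) = 0) \<longrightarrow> (\<forall>b<n. x b = 0)"
  proof (rule allI, rule impI)
    fix x assume H: "\<forall>a<n. (\<Sum>b<n. g a b * x b) = 0"
    let ?u = "\<lambda>f. x (the_inv_into {..<n} cols f)"
    have inv: "the_inv_into {..<n} cols (cols b) = b" if "b < n" for b
      using the_inv_into_f_f[OF injcols] that by simp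
    have "(\<Sum>f\<in>B. (\<lambda>t. ?u f * f t)) = (\<Sum>b<n. (\<lambda>t. x b * cols b t))"
      unfolding colsB[symmetric] by (simp add: sum.reindex[OF injcols] inv)
    also have "\<dots> = 0"
    proof
      fix a
      show "(\<Sum>b<n. (\<lambda>t. x b * cols b t)) a = 0 a"
      proof (cases "a < n")
        case True
        then show ?thesis using H by (simp add: sum_fun_apply g_def mult.commute)
      next
        case False
        have "cols b a = 0" if "b < n" for b
          using colsB that False supp[of "cols b" a] by auto
        then show ?thesis by (simp add: sum_fun_apply)
      qed
    qed
    finally have z: "(\<Sum>f\<in>B. (\<lambda>t. ?u f * f t)) = 0" .
    show "\<forall>b<n. x b = 0"
    proof (intro allI impI)
      fix b assume b: "b < n"
      have "cols b \<in> B" using colsB b by auto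
      then have "?u (cols b) = 0" using fv_indep_coef[OF B(3) finB z] by blast
      then show "x b = 0" using inv b by simp
    qed
  qed
  have "g \<in> GLn n" by (rule inj_GLn[OF ginj])
  moreover have "\<forall>a<n. \<forall>b<m. g a b = h a b" by (simp add: g_def cols_def col_def)
  ultimately show ?thesis by blast
qed

context tts begin

lemma Tr_sub_span: "Tr h l \<subseteq> fv.span (ebasis ` {..<s (l - 1) * s l})"
proof
  let ?m = "s (l - 1) * s l"
  fix f assume "f \<in> Tr h l"
  then obtain a where f: "f = (\<lambda>b. if b < ?m then h l a b else 0)" by (auto simp: Tr_def)
  have "f = (\<lambda>b. \<Sum>b'<?m. h l a b' * ebasis b' b)"
  proof
    fix b
    have "(\<Sum>b'<?m. h l a b' * ebasis b' b) = (\<Sum>b'<?m. if b' = b then h l a b' else 0)"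
      by (rule sum.cong) (auto simp: ebasis_def)
    then show "f b = (\<Sum>b'<?m. h l a b' * ebasis b' b)" using f by (simp add: sum.delta')
  qed
  moreover have "(\<lambda>b. \<Sum>b'<?m. h l a b' * ebasis b' b) \<in> fv.span (ebasis ` {..<?m})"
    by (rule fv_span_sumI) (auto intro: fv.span_base)
  ultimately show "f \<in> fv.span (ebasis ` {..<?m})" by simp
qed

lemma trunc_cols_indep:
  assumes dimge: "s (l - 1) * s l \<le> fv.dim (Tr h l)"
  shows "\<forall>lam. (\<forall>a<n l. (\<Sum>b<s (l - 1) * s l. h l a b * lam b) = 0) \<longrightarrow> (\<forall>b<s (l - 1) * s l. lam b = 0)"
proof (rule allI, rule impI, rule allI, rule impI)
  let ?m = "s (l - 1) * s l"
  fix lam b assume H: "\<forall>a<n l. (\<Sum>b<?m. h l a b * lam b) = 0" and b: "b < ?m"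
  obtain B where B: "B \<subseteq> Tr h l" "fv.independent B" "Tr h l \<subseteq> fv.span B" "card B = fv.dim (Tr h l)"
    using fv.basis_exists by blast
  have finE: "finite (ebasis ` {..<?m})" by simp
  have eb: "ebasis b \<in> fv.span (Tr h l)"
  proof (rule ccontr)
    assume nin: "ebasis b \<notin> fv.span (Tr h l)"
    have "fv.span B \<subseteq> fv.span (Tr h l)" using B(1) fv.span_mono by blast
    then have nin2: "ebasis b \<notin> fv.span B" using nin by blast
    have ind2: "fv.independent (insert (ebasis b) B)" by (rule fv.independent_insertI[OF nin2 B(2)])
    have "ebasis b \<in> fv.span (ebasis ` {..<?m})" using b by (intro fv.span_base) simp
    moreover have "B \<subseteq> fv.span (ebasis ` {..<?m})" using B(1) Tr_sub_span by blast
    ultimately have "insert (ebasis b) B \<subseteq> fv.span (ebasis ` {..<?m})" by blast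
    then have bd: "finite (insert (ebasis b) B) \<and> card (insert (ebasis b) B) \<le> card (ebasis ` {..<?m})"
      by (rule fv.independent_span_bound[OF finE ind2])
    have "ebasis b \<notin> B" using nin2 fv.span_base by blast
    then have "card (insert (ebasis b) B) = card B + 1" using bd by simp
    moreover have "card (ebasis ` {..<?m}) \<le> ?m" using card_image_le[of "{..<?m}" ebasis] by simp
    ultimately show False using bd B(4) dimge by simp
  qed
  define \<phi> where "\<phi> = (\<lambda>v::nat\<Rightarrow>real. \<Sum>b'<?m. v b' * lam b')"
  have "fv.span (Tr h l) \<subseteq> {v. \<phi> v = 0}"
  proof (rule fv.span_minimal)
    show "Tr h l \<subseteq> {v. \<phi> v = 0}"
    proof
      fix v assume "v \<in> Tr h l"
      then obtain a where a: "a < n l" "v = (\<lambda>b. if b < ?m then h l a b else 0)" by (auto simp: Tr_def)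
      have "\<phi> v = (\<Sum>b'<?m. h l a b' * lam b')" unfolding \<phi>_def a(2) by (rule sum.cong) auto
      then show "v \<in> {v. \<phi> v = 0}" using H a(1) by simp
    qed
  next
    show "fv.subspace {v. \<phi> v = 0}"
      unfolding fv.subspace_def
    proof (intro conjI ballI allI)
      show "0 \<in> {v. \<phi> v = 0}" by (simp add: \<phi>_def)
    next
      fix x y assume "x \<in> {v. \<phi> v = 0}" "y \<in> {v. \<phi> v = 0}"
      then show "x + y \<in> {v. \<phi> v = 0}" by (simp add: \<phi>_def sum.distrib algebra_simps)
    next
      fix c x assume x: "x \<in> {v. \<phi> v = 0}"
      have "\<phi> (\<lambda>t. c * x t) = c * \<phi> x" by (simp add: \<phi>_def sum_distrib_left mult.assoc)
      then show "(\<lambda>t. c * x t) \<in> {v. \<phi> v = 0}" using x by simp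
    qed
  qed
  then have "\<phi> (ebasis b) = 0" using eb by blast
  moreover have "\<phi> (ebasis b) = lam b"
  proof -
    have "\<phi> (ebasis b) = (\<Sum>b'<?m. if b' = b then lam b' else 0)"
      unfolding \<phi>_def by (rule sum.cong) (auto simp: ebasis_def)
    then show ?thesis using b by (simp add: sum.delta')
  qed
  ultimately show "lam b = 0" by simp
qed

lemma orbit_crit:
  assumes H: "\<forall>l\<in>{1..d}. s (l - 1) * s l \<le> ml_rank_i d n (act d n h (ttT d n s)) l"
  shows "act d n h (ttT d n s) \<in> orbit d n (ttT d n s)"
proof -
  have "\<forall>l\<in>{1..d}. \<exists>gl\<in>GLn (n l). \<forall>a<n l. \<forall>b<s (l - 1) * s l. gl a b = h l a b"
  proof
    fix l assume l: "l \<in> {1..d}"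
    have "s (l - 1) * s l \<le> fv.dim (Tr h l)" using H l ml_upper_act[OF l, of h] by (meson le_trans)
    then have ind: "\<forall>lam. (\<forall>a<n l. (\<Sum>b<s (l - 1) * s l. h l a b * lam b) = 0) \<longrightarrow> (\<forall>b<s (l - 1) * s l. lam b = 0)"
      by (rule trunc_cols_indep)
    have "s (l - 1) * s l \<le> n l" using sn l by blast
    then show "\<exists>gl\<in>GLn (n l). \<forall>a<n l. \<forall>b<s (l - 1) * s l. gl a b = h l a b"
      using extend_GLn[OF _ ind] by blast
  qed
  then obtain G where G: "\<And>l. l \<in> {1..d} \<Longrightarrow> G l \<in> GLn (n l) \<and> (\<forall>a<n l. \<forall>b<s (l - 1) * s l. G l a b = h l a b)"
    by metis
  have Grp: "G \<in> Grp d n" using G by (simp add: Grp_def)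
  have eqG: "act d n G (ttT d n s) = act d n h (ttT d n s)"
  proof
    fix j
    show "act d n G (ttT d n s) j = act d n h (ttT d n s) j"
    proof (cases "j \<in> idxs d n")
      case True
      have "(\<Sum>\<alpha>\<in>AL. \<Prod>l\<in>{1..d}. G l (j l) (tt_comp d s \<alpha> l)) = (\<Sum>\<alpha>\<in>AL. \<Prod>l\<in>{1..d}. h l (j l) (tt_comp d s \<alpha> l))"
      proof (intro sum.cong prod.cong refl)
        fix \<alpha> l assume a: "\<alpha> \<in> AL" and l: "l \<in> {1..d}"
        show "G l (j l) (tt_comp d s \<alpha> l) = h l (j l) (tt_comp d s \<alpha> l)"
          using G[OF l] idxs_mem[OF True l] comp_lt[OF a l] by blast
      qed
      then show ?thesis using act_ttT[OF True] by simp
    next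
      case False
      then show ?thesis by (simp add: act_def)
    qed
  qed
  show ?thesis unfolding orbit_def by (rule image_eqI[of _ _ G]) (use eqG Grp in auto)
qed

definition trows :: "tensor \<Rightarrow> nat \<Rightarrow> ((nat \<Rightarrow> nat) \<Rightarrow> real) set" where
  "trows T i = (\<lambda>r c. T (merge_idx i r c)) ` (\<Pi>\<^sub>E k\<in>{1..i}. {..<n k})"

lemma trows_inv:
  assumes f: "f \<in> fv.span (trows T i)" and cc: "\<forall>x>i. c x = c' x"
  shows "f c = f c'"
proof -
  have "fv.span (trows T i) \<subseteq> {f::(nat\<Rightarrow>nat)\<Rightarrow>real. \<forall>c c'. (\<forall>x>i. c x = c' x) \<longrightarrow> f c = f c'}"
  proof (rule fv.span_minimal)
    show "trows T i \<subseteq> {f::(nat\<Rightarrow>nat)\<Rightarrow>real. \<forall>c c'. (\<forall>x>i. c x = c' x) \<longrightarrow> f c = f c'}"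
    proof
      fix f assume "f \<in> trows T i"
      then obtain r where f: "f = (\<lambda>c. T (merge_idx i r c))" by (auto simp: trows_def)
      have "merge_idx i r c = merge_idx i r c'" if "\<forall>x>i. c x = c' x" for c c'
        using that by (auto simp: merge_idx_def fun_eq_iff)
      then show "f \<in> {f::(nat\<Rightarrow>nat)\<Rightarrow>real. \<forall>c c'. (\<forall>x>i. c x = c' x) \<longrightarrow> f c = f c'}" unfolding f mem_Collect_eq by metis
    qed
  next
    show "fv.subspace {f::(nat\<Rightarrow>nat)\<Rightarrow>real. \<forall>c c'. (\<forall>x>i. c x = c' x) \<longrightarrow> f c = f c'}"
      unfolding fv.subspace_def
    proof (intro conjI ballI allI)
      show "0 \<in> {f::(nat\<Rightarrow>nat)\<Rightarrow>real. \<forall>c c'. (\<forall>x>i. c x = c' x) \<longrightarrow> f c = f c'}" by simp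
    next
      fix x y :: "(nat \<Rightarrow> nat) \<Rightarrow> real" assume x: "x \<in> {f::(nat\<Rightarrow>nat)\<Rightarrow>real. \<forall>c c'. (\<forall>x>i. c x = c' x) \<longrightarrow> f c = f c'}"
        and y: "y \<in> {f::(nat\<Rightarrow>nat)\<Rightarrow>real. \<forall>c c'. (\<forall>x>i. c x = c' x) \<longrightarrow> f c = f c'}"
      show "x + y \<in> {f::(nat\<Rightarrow>nat)\<Rightarrow>real. \<forall>c c'. (\<forall>x>i. c x = c' x) \<longrightarrow> f c = f c'}"
      proof (rule CollectI, intro allI impI)
        fix c c' :: "nat \<Rightarrow> nat" assume cc: "\<forall>x>i. c x = c' x"
        have "x c = x c'" "y c = y c'" using x y cc by auto
        then show "(x + y) c = (x + y) c'" by simp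
      qed
    next
      fix a and x :: "(nat \<Rightarrow> nat) \<Rightarrow> real" assume x: "x \<in> {f::(nat\<Rightarrow>nat)\<Rightarrow>real. \<forall>c c'. (\<forall>x>i. c x = c' x) \<longrightarrow> f c = f c'}"
      show "(\<lambda>t. a * x t) \<in> {f::(nat\<Rightarrow>nat)\<Rightarrow>real. \<forall>c c'. (\<forall>x>i. c x = c' x) \<longrightarrow> f c = f c'}"
      proof (rule CollectI, intro allI impI)
        fix c c' :: "nat \<Rightarrow> nat" assume cc: "\<forall>x>i. c x = c' x"
        have "x c = x c'" using x cc by auto
        then show "a * x c = a * x c'" by simp
      qed
    qed
  qed
  then show ?thesis using f cc by blast
qed

lemma slice_span:
  assumes i: "i \<in> {2..d-1}" and f: "f \<in> fv.span (trows T (i - 1))" and a: "a < n i"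
  shows "(\<lambda>c. f (c(i := a))) \<in> fv.span (trows T i)"
proof -
  define L :: "((nat\<Rightarrow>nat)\<Rightarrow>real) \<Rightarrow> ((nat\<Rightarrow>nat)\<Rightarrow>real)" where "L = (\<lambda>f c. f (c(i := a)))"
  have lin: "Vector_Spaces.linear (\<lambda>a (f::(nat\<Rightarrow>nat)\<Rightarrow>real) x. a * f x) (\<lambda>a (f::(nat\<Rightarrow>nat)\<Rightarrow>real) x. a * f x) L"
    by (rule lin_fvI) (simp_all add: L_def fun_eq_iff)
  have sub: "L ` trows T (i - 1) \<subseteq> trows T i"
  proof
    fix g assume "g \<in> L ` trows T (i - 1)"
    then obtain r' where r': "r' \<in> (\<Pi>\<^sub>E k\<in>{1..i-1}. {..<n k})" "g = L (\<lambda>c. T (merge_idx (i - 1) r' c))"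
      by (auto simp: trows_def)
    have rm: "r'(i := a) \<in> (\<Pi>\<^sub>E k\<in>{1..i}. {..<n k})"
      unfolding PiE_iff extensional_def mem_Collect_eq
    proof (intro conjI ballI allI impI)
      fix x assume "x \<in> {1..i}"
      then show "(r'(i := a)) x \<in> {..<n x}" using r'(1) a by (cases "x = i") (auto simp: PiE_iff)
    next
      fix x assume "x \<notin> {1..i}"
      then show "(r'(i := a)) x = undefined" using r'(1) i by (auto simp: PiE_def extensional_def)
    qed
    have "g = (\<lambda>c. T (merge_idx i (r'(i := a)) c))"
    proof
      fix c
      have "merge_idx (i - 1) r' (c(i := a)) = merge_idx i (r'(i := a)) c"
        using i by (auto simp: merge_idx_def fun_eq_iff)
      then show "g c = T (merge_idx i (r'(i := a)) c)" using r'(2) by (simp add: L_def)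
    qed
    then show "g \<in> trows T i" using rm by (auto simp: trows_def)
  qed
  have "L f \<in> L ` fv.span (trows T (i - 1))" using f by blast
  also have "\<dots> = fv.span (L ` trows T (i - 1))" using fvp.linear_span_image[OF lin] by simp
  also have "\<dots> \<subseteq> fv.span (trows T i)" by (rule fv.span_mono[OF sub])
  finally show ?thesis by (simp add: L_def)
qed

lemma TTD:
  assumes T: "T \<in> tensors d n" and rk: "\<forall>i\<in>{1..d-1}. tt_rank_i d n T i \<le> s i"
  shows "\<exists>h. T = act d n h (ttT d n s)"
proof -
  have "\<forall>i. \<exists>wi. i \<in> {1..d-1} \<longrightarrow> (\<forall>\<gamma>. wi \<gamma> \<in> fv.span (trows T i)) \<and> trows T i \<subseteq> fv.span (wi ` {..<s i})"
  proof
    fix i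
    show "\<exists>wi. i \<in> {1..d-1} \<longrightarrow> (\<forall>\<gamma>. wi \<gamma> \<in> fv.span (trows T i)) \<and> trows T i \<subseteq> fv.span (wi ` {..<s i})"
    proof (cases "i \<in> {1..d-1}")
      case True
      have "fv.dim (trows T i) \<le> s i" using rk True by (simp add: tt_rank_fv trows_def)
      then show ?thesis using fv_span_fam[of "trows T i" "s i"] finite_ttrows by (auto simp: trows_def)
    next
      case False
      then show ?thesis by blast
    qed
  qed
  then obtain w where w: "\<And>i. i \<in> {1..d-1} \<Longrightarrow> (\<forall>\<gamma>. w i \<gamma> \<in> fv.span (trows T i)) \<and> trows T i \<subseteq> fv.span (w i ` {..<s i})"
    by metis
  have spw: "fv.span (trows T i) \<subseteq> fv.span (w i ` {..<s i})" if "i \<in> {1..d-1}" for i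
    using w[OF that] fv.span_mono fv.span_span by blast
  define r1 where "r1 = (\<lambda>a::nat. restrict (\<lambda>_::nat. a) {1..1::nat})"
  have "\<forall>a. \<exists>c. a < n 1 \<longrightarrow> (\<forall>x. T (merge_idx 1 (r1 a) x) = (\<Sum>\<gamma><s 1. c \<gamma> * w 1 \<gamma> x))"
  proof
    fix a
    show "\<exists>c. a < n 1 \<longrightarrow> (\<forall>x. T (merge_idx 1 (r1 a) x) = (\<Sum>\<gamma><s 1. c \<gamma> * w 1 \<gamma> x))"
    proof (cases "a < n 1")
      case True
      have "r1 a \<in> (\<Pi>\<^sub>E k\<in>{1..1}. {..<n k})" using True by (simp add: r1_def)
      then have "(\<lambda>c. T (merge_idx 1 (r1 a) c)) \<in> trows T 1" by (auto simp: trows_def)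
      moreover have "1 \<in> {1..d-1}" using d3 by auto
      ultimately have "(\<lambda>c. T (merge_idx 1 (r1 a) c)) \<in> fv.span (w 1 ` {..<s 1})" using w by blast
      then show ?thesis using fv_span_coef by blast
    qed simp
  qed
  then obtain c1 where c1: "\<And>a x. a < n 1 \<Longrightarrow> T (merge_idx 1 (r1 a) x) = (\<Sum>\<gamma><s 1. c1 a \<gamma> * w 1 \<gamma> x)"
    by metis
  have "\<forall>i \<beta> a. \<exists>c. (i \<in> {2..d-1} \<and> a < n i) \<longrightarrow> (\<forall>x. w (i - 1) \<beta> (x(i := a)) = (\<Sum>\<gamma><s i. c \<gamma> * w i \<gamma> x))"
  proof (intro allI)
    fix i \<beta> a
    show "\<exists>c. (i \<in> {2..d-1} \<and> a < n i) \<longrightarrow> (\<forall>x. w (i - 1) \<beta> (x(i := a)) = (\<Sum>\<gamma><s i. c \<gamma> * w i \<gamma> x))"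
    proof (cases "i \<in> {2..d-1} \<and> a < n i")
      case True
      then have i1: "i - 1 \<in> {1..d-1}" "i \<in> {1..d-1}" by auto
      have "w (i - 1) \<beta> \<in> fv.span (trows T (i - 1))" using w[OF i1(1)] by blast
      then have "(\<lambda>c. w (i - 1) \<beta> (c(i := a))) \<in> fv.span (trows T i)" using slice_span True by blast
      then have "(\<lambda>c. w (i - 1) \<beta> (c(i := a))) \<in> fv.span (w i ` {..<s i})" using spw[OF i1(2)] by blast
      then show ?thesis using fv_span_coef by blast
    next
      case False
      then show ?thesis by blast
    qed
  qed
  then obtain cm where cm: "\<And>i \<beta> a x. i \<in> {2..d-1} \<Longrightarrow> a < n i \<Longrightarrow> w (i - 1) \<beta> (x(i := a)) = (\<Sum>\<gamma><s i. cm i \<beta> a \<gamma> * w i \<gamma> x)"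
    by metis
  define C where "C = (\<lambda>l \<beta> a \<gamma>. if l = 1 then c1 a \<gamma> else if l = d then w (d - 1) \<beta> ((\<lambda>_. undefined)(d := a)) else cm l \<beta> a \<gamma>)"
  define h where "h = (\<lambda>l a b. if b < s (l - 1) * s l then C l (b div s l) a (b mod s l) else 0)"
  define P where "P = (\<lambda>k (\<alpha>::nat\<Rightarrow>nat) (j::nat\<Rightarrow>nat). \<Prod>l\<in>{1..k}. C l (\<alpha> (l - 1)) (j l) (\<alpha> l))"
  have tele: "\<forall>j\<in>idxs d n. T j = (\<Sum>\<alpha>\<in>Pi\<^sub>E {1..k} (\<lambda>k. {..<s k}). P k \<alpha> j * w k (\<alpha> k) j)"
    if "1 \<le> k" "k \<le> d - 1" for k
    using that
  proof (induction k rule: nat_induct_at_least)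
    case base
    show ?case
    proof
      fix j assume j: "j \<in> idxs d n"
      have j1: "j 1 < n 1" using idxs_mem[OF j, of 1] d3 by auto
      have jm: "j = merge_idx 1 (r1 (j 1)) j"
      proof
        fix x
        show "j x = merge_idx 1 (r1 (j 1)) j x"
        proof (cases "x = 0")
          case True
          then have "j x = undefined" using j by (auto simp: idxs_def PiE_def extensional_def)
          then show ?thesis using True by (simp add: merge_idx_def r1_def)
        next
          case False
          then show ?thesis by (cases "x = 1") (auto simp: merge_idx_def r1_def)
        qed
      qed
      have "T j = (\<Sum>\<gamma><s 1. c1 (j 1) \<gamma> * w 1 \<gamma> j)" using c1[OF j1, of j] jm by simp
      also have "\<dots> = (\<Sum>b\<in>{..<s 1}. \<Sum>k'\<in>Pi\<^sub>E ({1..1} - {1}) (\<lambda>k. {..<s k}). P 1 (k'(1 := b)) j * w 1 ((k'(1 := b)) 1) j)"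
        by (simp add: P_def C_def)
      also have "\<dots> = (\<Sum>\<alpha>\<in>Pi\<^sub>E {1..1} (\<lambda>k. {..<s k}). P 1 \<alpha> j * w 1 (\<alpha> 1) j)"
        by (rule sum_PiE_upd[symmetric]) auto
      finally show "T j = (\<Sum>\<alpha>\<in>Pi\<^sub>E {1..1} (\<lambda>k. {..<s k}). P 1 \<alpha> j * w 1 (\<alpha> 1) j)" .
    qed
  next
    case (Suc k)
    have k: "1 \<le> k" "Suc k \<le> d - 1" "k \<le> d - 1" using Suc by auto
    show ?case
    proof
      fix j assume j: "j \<in> idxs d n"
      have sk: "Suc k \<in> {2..d-1}" "Suc k \<noteq> 1" "Suc k \<noteq> d" using k by auto
      have jsk: "j (Suc k) < n (Suc k)" using idxs_mem[OF j, of "Suc k"] k by auto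
      have step: "w k \<beta> j = (\<Sum>\<gamma><s (Suc k). C (Suc k) \<beta> (j (Suc k)) \<gamma> * w (Suc k) \<gamma> j)" for \<beta>
        using cm[OF sk(1) jsk, of \<beta> j] sk by (simp add: C_def)
      have "T j = (\<Sum>\<alpha>\<in>Pi\<^sub>E {1..k} (\<lambda>k. {..<s k}). P k \<alpha> j * w k (\<alpha> k) j)" using Suc.IH[OF k(3)] j by blast
      also have "\<dots> = (\<Sum>\<alpha>\<in>Pi\<^sub>E {1..k} (\<lambda>k. {..<s k}). \<Sum>\<gamma><s (Suc k). P k \<alpha> j * C (Suc k) (\<alpha> k) (j (Suc k)) \<gamma> * w (Suc k) \<gamma> j)"
        by (simp add: step sum_distrib_left mult.assoc)
      also have "\<dots> = (\<Sum>\<gamma><s (Suc k). \<Sum>\<alpha>\<in>Pi\<^sub>E {1..k} (\<lambda>k. {..<s k}). P k \<alpha> j * C (Suc k) (\<alpha> k) (j (Suc k)) \<gamma> * w (Suc k) \<gamma> j)"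
        by (rule sum.swap)
      also have "\<dots> = (\<Sum>\<gamma>\<in>{..<s (Suc k)}. \<Sum>\<alpha>\<in>Pi\<^sub>E ({1..Suc k} - {Suc k}) (\<lambda>k. {..<s k}). P (Suc k) (\<alpha>(Suc k := \<gamma>)) j * w (Suc k) ((\<alpha>(Suc k := \<gamma>)) (Suc k)) j)"
      proof (intro sum.cong refl)
        fix \<gamma> \<alpha> assume "\<alpha> \<in> Pi\<^sub>E ({1..Suc k} - {Suc k}) (\<lambda>k. {..<s k})"
        have "P (Suc k) (\<alpha>(Suc k := \<gamma>)) j = P k \<alpha> j * C (Suc k) (\<alpha> k) (j (Suc k)) \<gamma>"
        proof -
          have "P (Suc k) (\<alpha>(Suc k := \<gamma>)) j = (\<Prod>l\<in>{1..k}. C l ((\<alpha>(Suc k := \<gamma>)) (l - 1)) (j l) ((\<alpha>(Suc k := \<gamma>)) l)) *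
                  C (Suc k) ((\<alpha>(Suc k := \<gamma>)) k) (j (Suc k)) ((\<alpha>(Suc k := \<gamma>)) (Suc k))"
            unfolding P_def using k by (simp add: prod.cl_ivl_Suc)
          also have "(\<Prod>l\<in>{1..k}. C l ((\<alpha>(Suc k := \<gamma>)) (l - 1)) (j l) ((\<alpha>(Suc k := \<gamma>)) l)) = P k \<alpha> j"
            unfolding P_def by (rule prod.cong) auto
          also have "C (Suc k) ((\<alpha>(Suc k := \<gamma>)) k) (j (Suc k)) ((\<alpha>(Suc k := \<gamma>)) (Suc k)) = C (Suc k) (\<alpha> k) (j (Suc k)) \<gamma>"
            by simp
          finally show ?thesis .
        qed
        moreover have "{1..Suc k} - {Suc k} = {1..k}" by auto
        ultimately show "P k \<alpha> j * C (Suc k) (\<alpha> k) (j (Suc k)) \<gamma> * w (Suc k) \<gamma> j =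
          P (Suc k) (\<alpha>(Suc k := \<gamma>)) j * w (Suc k) ((\<alpha>(Suc k := \<gamma>)) (Suc k)) j" by simp
      next
        show "Pi\<^sub>E {1..k} (\<lambda>k. {..<s k}) = Pi\<^sub>E ({1..Suc k} - {Suc k}) (\<lambda>k. {..<s k})"
          by (metis atLeastAtMostSuc_conv Diff_insert_absorb atLeastAtMost_iff le_SucI not_less_eq_eq k(1))
      qed
      also have "\<dots> = (\<Sum>\<alpha>\<in>Pi\<^sub>E {1..Suc k} (\<lambda>k. {..<s k}). P (Suc k) \<alpha> j * w (Suc k) (\<alpha> (Suc k)) j)"
        by (rule sum_PiE_upd[symmetric]) auto
      finally show "T j = (\<Sum>\<alpha>\<in>Pi\<^sub>E {1..Suc k} (\<lambda>k. {..<s k}). P (Suc k) \<alpha> j * w (Suc k) (\<alpha> (Suc k)) j)" .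
    qed
  qed
  have Tform: "T j = (\<Sum>\<alpha>\<in>AL. \<Prod>l\<in>{1..d}. C l (\<alpha> (l - 1)) (j l) (\<alpha> l))" if j: "j \<in> idxs d n" for j
  proof -
    have dd: "1 \<le> d - 1" "d - 1 \<le> d - 1" "d - 1 \<in> {1..d-1}" "d = Suc (d - 1)" using d3 by auto
    have "T j = (\<Sum>\<alpha>\<in>AL. P (d - 1) \<alpha> j * w (d - 1) (\<alpha> (d - 1)) j)"
      using tele[OF dd(1,2)] j by (simp add: AL_def)
    also have "\<dots> = (\<Sum>\<alpha>\<in>AL. \<Prod>l\<in>{1..d}. C l (\<alpha> (l - 1)) (j l) (\<alpha> l))"
    proof (rule sum.cong[OF refl])
      fix \<alpha> assume "\<alpha> \<in> AL"
      have winv: "w (d - 1) (\<alpha> (d - 1)) j = w (d - 1) (\<alpha> (d - 1)) ((\<lambda>_. undefined)(d := j d))"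
      proof -
        have f1: "w (d - 1) (\<alpha> (d - 1)) \<in> fv.span (trows T (d - 1))" using w[OF dd(3)] by blast
        have f2: "\<forall>x>d - 1. j x = ((\<lambda>_. undefined)(d := j d)) x"
          using j dd by (auto simp: idxs_def PiE_def extensional_def)
        show ?thesis by (rule trows_inv[OF f1 f2])
      qed
      have "(\<Prod>l\<in>{1..d}. C l (\<alpha> (l - 1)) (j l) (\<alpha> l)) = P (d - 1) \<alpha> j * C d (\<alpha> (d - 1)) (j d) (\<alpha> d)"
        unfolding P_def by (subst dd(4), subst prod.cl_ivl_Suc) (use dd in simp)
      also have "C d (\<alpha> (d - 1)) (j d) (\<alpha> d) = w (d - 1) (\<alpha> (d - 1)) j"
        using winv d3 by (simp add: C_def)
      finally show "P (d - 1) \<alpha> j * w (d - 1) (\<alpha> (d - 1)) j = (\<Prod>l\<in>{1..d}. C l (\<alpha> (l - 1)) (j l) (\<alpha> l))" by simp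
    qed
    finally show ?thesis .
  qed
  have hC: "h l a (tt_comp d s \<alpha> l) = C l (\<alpha> (l - 1)) a (\<alpha> l)" if a: "\<alpha> \<in> AL" and l: "l \<in> {1..d}" for \<alpha> l a
  proof -
    have lt: "tt_comp d s \<alpha> l < s (l - 1) * s l" by (rule comp_lt[OF a l])
    consider "l = 1" | "l = d" | "l \<noteq> 1" "l \<noteq> d" by blast
    then show ?thesis
    proof cases
      case 1
      have "1 \<in> {1..d-1}" using d3 by auto
      then have "\<alpha> 1 < s 1" using AL_mem[OF a] by blast
      then show ?thesis using lt 1 d3 by (simp add: h_def C_def tt_comp_def)
    next
      case 2
      then show ?thesis using lt d3 sd by (simp add: h_def C_def tt_comp_def)
    next
      case 3
      then have "l \<in> {1..d-1}" using l by auto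
      then have "\<alpha> l < s l" "s l > 0" using AL_mem[OF a] s_pos_all by auto
      then show ?thesis using lt 3 by (simp add: h_def C_def tt_comp_def iota_def)
    qed
  qed
  show ?thesis
  proof (intro exI[of _ h] ext)
    fix j
    show "T j = act d n h (ttT d n s) j"
    proof (cases "j \<in> idxs d n")
      case True
      have "act d n h (ttT d n s) j = (\<Sum>\<alpha>\<in>AL. \<Prod>l\<in>{1..d}. h l (j l) (tt_comp d s \<alpha> l))" by (rule act_ttT[OF True])
      also have "\<dots> = (\<Sum>\<alpha>\<in>AL. \<Prod>l\<in>{1..d}. C l (\<alpha> (l - 1)) (j l) (\<alpha> l))"
        by (intro sum.cong prod.cong refl) (simp add: hC)
      finally show ?thesis using Tform[OF True] by simp
    next
      case False
      then show ?thesis using T by (simp add: act_def tensors_def)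
    qed
  qed
qed

end

context tts begin

lemma act_idm_ttT: "act d n (\<lambda>x a b. if a = b then 1 else 0) (ttT d n s) = ttT d n s"
  by (rule act_id[OF ttT_tensors])

lemma ttT_fibre: "ttT d n s \<in> ttrank_fibre d n s"
  unfolding ttrank_fibre_def
proof (intro CollectI conjI ballI)
  show "ttT d n s \<in> tensors d n" by (rule ttT_tensors)
  fix i assume i: "i \<in> {1..d-1}"
  have "tt_rank_i d n (ttT d n s) i \<le> s i"
    using tt_upper_act[OF i, of "\<lambda>x a b. if a = b then 1 else 0"] act_idm_ttT by simp
  then show "tt_rank_i d n (ttT d n s) i = s i" using tt_lower[OF i] by simp
qed

lemma fibre_inv:
  assumes g: "g \<in> Grp d n" and T: "T \<in> ttrank_fibre d n s"
  shows "act d n g T \<in> ttrank_fibre d n s"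
proof -
  have Tt: "T \<in> tensors d n" using T by (simp add: ttrank_fibre_def)
  obtain g' where g': "\<forall>T\<in>tensors d n. act d n g' (act d n g T) = T" using act_inv[OF g] by blast
  show ?thesis unfolding ttrank_fibre_def
  proof (intro CollectI conjI ballI)
    show "act d n g T \<in> tensors d n" by (rule act_tensors)
    fix i assume i: "i \<in> {1..d-1}"
    have "tt_rank_i d n (act d n g T) i \<le> tt_rank_i d n T i" by (rule tt_mono_act[OF Tt i])
    moreover have "tt_rank_i d n T i \<le> tt_rank_i d n (act d n g T) i"
      using tt_mono_act[OF act_tensors i, of g' g T] g' Tt by simp
    ultimately show "tt_rank_i d n (act d n g T) i = s i" using T i by (simp add: ttrank_fibre_def)
  qed
qed

lemma orbit_sub: "orbit d n (ttT d n s) \<subseteq> ttrank_fibre d n s"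
  unfolding orbit_def using fibre_inv ttT_fibre by blast

lemma orbit_ml:
  assumes T: "T \<in> orbit d n (ttT d n s)" and l: "l \<in> {1..d}"
  shows "ml_rank_i d n T l = s (l - 1) * s l"
proof -
  obtain g where g: "g \<in> Grp d n" "T = act d n g (ttT d n s)" using T by (auto simp: orbit_def)
  obtain g' where g': "\<forall>T\<in>tensors d n. act d n g' (act d n g T) = T" using act_inv[OF g(1)] by blast
  have "ml_rank_i d n T l \<le> s (l - 1) * s l"
    using ml_upper_act[OF l, of g] Tr_dim[of g l] g(2) by simp
  moreover have "s (l - 1) * s l \<le> ml_rank_i d n T l"
  proof -
    have "s (l - 1) * s l \<le> ml_rank_i d n (ttT d n s) l" by (rule ml_lower[OF l])
    also have "\<dots> = ml_rank_i d n (act d n g' T) l" using g' g(2) ttT_tensors by simp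
    also have "\<dots> \<le> ml_rank_i d n T l" using ml_mono_act[OF _ l] g(2) act_tensors by simp
    finally show ?thesis .
  qed
  ultimately show ?thesis by simp
qed

lemma orbit_char:
  "orbit d n (ttT d n s) = {T \<in> ttrank_fibre d n s. \<forall>i\<in>{1..d}. ml_rank_i d n T i = s (i - 1) * s i}"
proof (intro equalityI subsetI)
  fix T assume "T \<in> orbit d n (ttT d n s)"
  then show "T \<in> {T \<in> ttrank_fibre d n s. \<forall>i\<in>{1..d}. ml_rank_i d n T i = s (i - 1) * s i}"
    using orbit_sub orbit_ml by blast
next
  fix T assume "T \<in> {T \<in> ttrank_fibre d n s. \<forall>i\<in>{1..d}. ml_rank_i d n T i = s (i - 1) * s i}"
  then have T: "T \<in> ttrank_fibre d n s" "\<forall>i\<in>{1..d}. ml_rank_i d n T i = s (i - 1) * s i" by auto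
  obtain h where h: "T = act d n h (ttT d n s)"
    using TTD[of T] T(1) by (auto simp: ttrank_fibre_def)
  show "T \<in> orbit d n (ttT d n s)" using orbit_crit[of h] T(2) h by simp
qed

lemma density:
  assumes T: "T \<in> ttrank_fibre d n s"
  shows "T \<in> closure (orbit d n (ttT d n s))"
proof -
  obtain h where h: "T = act d n h (ttT d n s)"
    using TTD[of T] T by (auto simp: ttrank_fibre_def)
  define gt where "gt = (\<lambda>t::real. \<lambda>l a b. h l a b + t * (if a = b then 1 else 0))"
  define bad where "bad = (\<Union>l\<in>{1..d}. {t. \<not> (\<forall>x. (\<forall>i<n l. (\<Sum>j<n l. (h l i j + t * (if i = j then 1 else 0)) * x j) = 0) \<longrightarrow> (\<forall>j<n l. x j = 0))})"
  have finbad: "finite bad" unfolding bad_def by (intro finite_UN_I finite_atLeastAtMost eig_finite)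
  have ev: "eventually (\<lambda>t. t \<notin> bad) (at (0::real))"
    using islimpt_finite[OF finbad, of 0] islimpt_iff_eventually by blast
  have inorb: "act d n (gt t) (ttT d n s) \<in> orbit d n (ttT d n s)" if "t \<notin> bad" for t
  proof -
    have "gt t \<in> Grp d n" unfolding Grp_def
    proof (intro CollectI ballI)
      fix l assume l: "l \<in> {1..d}"
      then have "\<forall>x. (\<forall>i<n l. (\<Sum>j<n l. (h l i j + t * (if i = j then 1 else 0)) * x j) = 0) \<longrightarrow> (\<forall>j<n l. x j = 0)"
        using that l unfolding bad_def by blast
      then show "gt t l \<in> GLn (n l)" unfolding gt_def by (rule inj_GLn)
    qed
    then show ?thesis by (auto simp: orbit_def)
  qed
  define F where "F = (\<lambda>t. act d n (gt t) (ttT d n s))"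
  have cont: "continuous_on UNIV F"
  proof (rule continuous_on_coordinatewise_then_product)
    fix j
    show "continuous_on UNIV (\<lambda>t. F t j)"
    proof (cases "j \<in> idxs d n")
      case True
      then show ?thesis unfolding F_def act_def gt_def by simp (intro continuous_intros)
    next
      case False
      then show ?thesis unfolding F_def act_def gt_def by simp
    qed
  qed
  have F0: "F 0 = T" using h by (simp add: F_def gt_def)
  have lim: "(F \<longlongrightarrow> T) (at 0)"
    using cont F0 by (metis continuous_on_eq_continuous_at isCont_def open_UNIV UNIV_I)
  have "eventually (\<lambda>t. F t \<in> closure (orbit d n (ttT d n s))) (at 0)"
    using ev by (rule eventually_mono) (use inorb closure_subset in \<open>auto simp: F_def\<close>)
  then show ?thesis
    using Lim_in_closed_set[OF closed_closure _ _ lim] by simp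
qed

end

lemma det_JM: "Determinant.det (JM A k) = (\<Sum>p | p permutes {0..<k}. of_int (sign p) * (\<Prod>i = 0..<k. A i (p i)))"
proof -
  have "Determinant.det (JM A k) = (\<Sum>p | p permutes {0..<k}. of_int (sign p) * (\<Prod>i = 0..<k. JM A k $$ (i, p i)))"
    by (simp add: Determinant.det_def)
  also have "\<dots> = (\<Sum>p | p permutes {0..<k}. of_int (sign p) * (\<Prod>i = 0..<k. A i (p i)))"
  proof (rule sum.cong[OF refl])
    fix p assume "p \<in> {p. p permutes {0..<k}}"
    then have p: "p permutes {0..<k}" by simp
    have "(\<Prod>i = 0..<k. JM A k $$ (i, p i)) = (\<Prod>i = 0..<k. A i (p i))"
    proof (rule prod.cong[OF refl])
      fix i assume i: "i \<in> {0..<k}"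
      then have "p i \<in> {0..<k}" using permutes_in_image[OF p] by simp
      then show "JM A k $$ (i, p i) = A i (p i)" using i by (simp add: JM_def)
    qed
    then show "of_int (sign p) * (\<Prod>i = 0..<k. JM A k $$ (i, p i)) = of_int (sign p) * (\<Prod>i = 0..<k. A i (p i))" by simp
  qed
  finally show ?thesis .
qed

lemma cont_det:
  fixes A :: "'a::topological_space \<Rightarrow> nat \<Rightarrow> nat \<Rightarrow> real"
  assumes "\<And>i j. continuous_on UNIV (\<lambda>T. A T i j)"
  shows "continuous_on UNIV (\<lambda>T. Determinant.det (JM (A T) k))"
  unfolding det_JM by (intro continuous_intros assms)

lemma polyfun_sum: "finite I \<Longrightarrow> (\<And>i. i \<in> I \<Longrightarrow> polyfun (f i)) \<Longrightarrow> polyfun (\<lambda>T. \<Sum>i\<in>I. f i T)"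
proof (induction I rule: finite_induct)
  case empty
  then show ?case using pconst[of 0] by simp
next
  case (insert x F)
  then show ?case by (simp add: padd)
qed

lemma polyfun_prod: "finite I \<Longrightarrow> (\<And>i. i \<in> I \<Longrightarrow> polyfun (f i)) \<Longrightarrow> polyfun (\<lambda>T. \<Prod>i\<in>I. f i T)"
proof (induction I rule: finite_induct)
  case empty
  then show ?case using pconst[of 1] by simp
next
  case (insert x F)
  then show ?case by (simp add: pmult)
qed

lemma polyfun_det:
  assumes "\<And>i j. polyfun (\<lambda>T. A T i j)"
  shows "polyfun (\<lambda>T. Determinant.det (JM (A T) k))"
  unfolding det_JM
proof (rule polyfun_sum)
  show "finite {p. p permutes {0..<k}}" by (simp add: finite_permutations)
next
  fix p assume "p \<in> {p. p permutes {0..<k}}"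
  have c: "polyfun (\<lambda>T. of_int (sign p) :: real)" by (rule pconst)
  have q: "polyfun (\<lambda>T. \<Prod>i = 0..<k. A T i (p i))" by (rule polyfun_prod) (auto intro: assms)
  show "polyfun (\<lambda>T. of_int (sign p) * (\<Prod>i = 0..<k. A T i (p i)))" by (rule pmult[OF c q])
qed

lemma det_easy:
  fixes v :: "nat \<Rightarrow> 'c \<Rightarrow> real"
  assumes R: "finite R" and v: "\<forall>\<mu><k. v \<mu> \<in> R" and dt: "Determinant.det (JM (\<lambda>\<nu> \<mu>. v \<mu> (p \<nu>)) k) \<noteq> 0"
  shows "k \<le> fv.dim R"
proof (rule fv_rank_ge[of k v p])
  have inj: "\<forall>x. (\<forall>i<k. (\<Sum>j<k. v j (p i) * x j) = 0) \<longrightarrow> (\<forall>j<k. x j = 0)"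
    using iffD1[OF jnf_det_inj[of "\<lambda>\<nu> \<mu>. v \<mu> (p \<nu>)" k] dt] by simp
  fix lam assume "\<forall>\<nu><k. (\<Sum>\<mu><k. lam \<mu> * v \<mu> (p \<nu>)) = 0"
  then have "\<forall>i<k. (\<Sum>j<k. v j (p i) * lam j) = 0" by (simp add: mult.commute)
  then show "\<forall>\<mu><k. lam \<mu> = 0" using inj by blast
qed (use v R in auto)

lemma det_hard:
  fixes R :: "('c \<Rightarrow> real) set"
  assumes R: "finite R" and k: "k \<le> fv.dim R"
  shows "\<exists>v p. (\<forall>\<mu><k. v \<mu> \<in> R) \<and> Determinant.det (JM (\<lambda>\<nu> \<mu>. v \<mu> (p \<nu>)) k) \<noteq> 0"
proof -
  obtain B where B: "B \<subseteq> R" "fv.independent B" "R \<subseteq> fv.span B" "card B = fv.dim R"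
    using fv.basis_exists by blast
  have finB: "finite B" using B(1) R finite_subset by blast
  obtain B' where B': "B' \<subseteq> B" "card B' = k" using obtain_subset_with_card_n[of k B] k B(4) by metis
  have finB': "finite B'" using B'(1) finB finite_subset by blast
  have indB': "fv.independent B'" using fv.independent_mono[OF B(2) B'(1)] .
  obtain e where e: "bij_betw e {0..<k} B'" using ex_bij_betw_nat_finite[OF finB'] B'(2) by auto
  have inje: "inj_on e {..<k}" using e by (simp add: bij_betw_def atLeast0LessThan)
  have ime: "e ` {..<k} = B'" using e by (simp add: bij_betw_def atLeast0LessThan)
  have hyp: "\<forall>lam. (\<forall>c. (\<Sum>\<mu><k. lam \<mu> * e \<mu> c) = 0) \<longrightarrow> (\<forall>\<mu><k. lam \<mu> = 0)"
  proof (rule allI, rule impI, rule allI, rule impI)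
    fix lam \<mu> assume H: "\<forall>c. (\<Sum>\<mu><k. lam \<mu> * e \<mu> c) = 0" and mu: "\<mu> < k"
    let ?u = "\<lambda>f. lam (the_inv_into {..<k} e f)"
    have inv: "the_inv_into {..<k} e (e b) = b" if "b < k" for b
      using the_inv_into_f_f[OF inje] that by simp
    have "(\<Sum>f\<in>B'. (\<lambda>t. ?u f * f t)) = (\<Sum>b<k. (\<lambda>t. lam b * e b t))"
      unfolding ime[symmetric] by (simp add: sum.reindex[OF inje] inv)
    also have "\<dots> = 0" using H by (simp add: fun_eq_iff sum_fun_apply)
    finally have z: "(\<Sum>f\<in>B'. (\<lambda>t. ?u f * f t)) = 0" .
    have "e \<mu> \<in> B'" using ime mu by auto
    then have "?u (e \<mu>) = 0" using fv_indep_coef[OF indB' finB' z] by blast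
    then show "lam \<mu> = 0" using inv mu by simp
  qed
  obtain p where p: "\<forall>lam. (\<forall>\<nu><k. (\<Sum>\<mu><k. lam \<mu> * e \<mu> (p \<nu>)) = 0) \<longrightarrow> (\<forall>\<mu><k. lam \<mu> = 0)"
    using indep_points[OF hyp] by blast
  have "\<forall>x. (\<forall>i<k. (\<Sum>j<k. e j (p i) * x j) = 0) \<longrightarrow> (\<forall>j<k. x j = 0)"
    using p by (simp add: mult.commute)
  then have "Determinant.det (JM (\<lambda>\<nu> \<mu>. e \<mu> (p \<nu>)) k) \<noteq> 0"
    by (intro iffD2[OF jnf_det_inj[of "\<lambda>\<nu> \<mu>. e \<mu> (p \<nu>)" k]]) simp
  moreover have "\<forall>\<mu><k. e \<mu> \<in> R" using ime B'(1) B(1) by auto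
  ultimately show ?thesis by blast
qed

lemma det_id_ne0: "Determinant.det (JM (\<lambda>i j. if j = i then 1 else 0) k) \<noteq> 0"
proof -
  have "\<forall>x. (\<forall>i<k. (\<Sum>j<k. (if j = i then 1 else 0) * x j) = 0) \<longrightarrow> (\<forall>j<k. x j = (0::real))"
  proof (intro allI impI)
    fix x :: "nat \<Rightarrow> real" and j assume H: "\<forall>i<k. (\<Sum>j<k. (if j = i then 1 else 0) * x j) = 0" and j: "j < k"
    have "(\<Sum>j'<k. (if j' = j then 1 else 0) * x j') = (\<Sum>j'<k. if j' = j then x j' else 0)"
      by (rule sum.cong) auto
    also have "\<dots> = x j" using j by (simp add: sum.delta)
    finally have "(\<Sum>j'<k. (if j' = j then 1 else 0) * x j') = x j" .
    then show "x j = 0" using H j by simp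
  qed
  then show ?thesis by (intro iffD2[OF jnf_det_inj[of "\<lambda>i j. if j = i then 1 else 0" k]]) simp
qed

lemma JM_cong: "(\<And>i j. i < k \<Longrightarrow> j < k \<Longrightarrow> A i j = B i j) \<Longrightarrow> JM A k = JM B k"
  by (auto simp: JM_def intro!: eq_matI)

context tts begin

definition amv where "amv l m = restrict (\<lambda>x. if x = l - 1 then m div s l else if x = l then m mod s l else 0) {1..d-1}"
definition pts where "pts l \<nu> = restrict (tt_comp d s (amv l \<nu>)) {1..d}"

lemma ml_key:
  assumes l: "l \<in> {1..d}" and mu: "\<mu> < s (l - 1) * s l" and nu: "\<nu> < s (l - 1) * s l"
  shows "ttT d n s ((pts l \<nu>)(l := \<mu>)) = (if \<mu> = \<nu> then 1 else 0)"
proof -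
  let ?m = "s (l - 1) * s l"
  have slp: "s l > 0" using s_l_pos[OF l] .
  have amAL: "amv l m \<in> AL" if m: "m < ?m" for m
    unfolding AL_def PiE_iff
  proof (intro conjI ballI)
    fix x assume x: "x \<in> {1..d-1}"
    show "amv l m x \<in> {..<s x}"
    proof (cases "x = l - 1")
      case True
      then show ?thesis using x m slp by (auto simp: amv_def less_mult_imp_div_less)
    next
      case False
      then show ?thesis using x slp s_pos_all[OF x] by (cases "x = l") (auto simp: amv_def)
    qed
  qed (simp add: amv_def)
  have amc: "tt_comp d s (amv l m) l = m" if m: "m < ?m" for m
  proof -
    consider "l = 1" | "l = d" | "l \<noteq> 1" "l \<noteq> d" by blast
    then show ?thesis
    proof cases
      case 1
      then show ?thesis using m d3 s0 by (auto simp: tt_comp_def amv_def)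
    next
      case 2
      then show ?thesis using m d3 sd by (auto simp: tt_comp_def amv_def)
    next
      case 3
      then have "l - 1 \<in> {1..d-1}" "l \<in> {1..d-1}" "l - 1 \<noteq> l" using l by auto
      then show ?thesis using 3 by (simp add: tt_comp_def amv_def iota_def)
    qed
  qed
  have mn: "?m \<le> n l" using sn l by auto
  let ?J = "(pts l \<nu>)(l := \<mu>)"
  have Jbox: "?J \<in> idxs d n"
    unfolding idxs_def PiE_iff extensional_def mem_Collect_eq
  proof (intro conjI ballI allI impI)
    fix x assume x: "x \<in> {1..d}"
    then show "?J x \<in> {..<n x}" using comp_lt_n[OF amAL[OF nu] x] mu mn by (auto simp: pts_def)
  next
    fix x assume "x \<notin> {1..d}"
    then show "?J x = undefined" using l by (auto simp: pts_def)
  qed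
  show ?thesis
  proof (cases "\<mu> = \<nu>")
    case True
    have "\<forall>x\<in>{1..d}. ?J x = tt_comp d s (amv l \<nu>) x" using True amc[OF nu] by (auto simp: pts_def)
    then show ?thesis using True ttT_val2[OF Jbox] amAL[OF nu] by auto
  next
    case False
    have "\<not> (\<exists>\<alpha>\<in>AL. \<forall>x\<in>{1..d}. ?J x = tt_comp d s \<alpha> x)"
    proof
      assume "\<exists>\<alpha>\<in>AL. \<forall>x\<in>{1..d}. ?J x = tt_comp d s \<alpha> x"
      then obtain \<alpha> where a: "\<alpha> \<in> AL" "\<forall>x\<in>{1..d}. ?J x = tt_comp d s \<alpha> x" by blast
      have "\<forall>x\<in>{1..d} - {l}. tt_comp d s \<alpha> x = tt_comp d s (amv l \<nu>) x"
      proof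
        fix x assume x: "x \<in> {1..d} - {l}"
        then have "?J x = tt_comp d s (amv l \<nu>) x" by (auto simp: pts_def)
        moreover have "?J x = tt_comp d s \<alpha> x" using a(2) x by blast
        ultimately show "tt_comp d s \<alpha> x = tt_comp d s (amv l \<nu>) x" by simp
      qed
      then have "\<alpha> = amv l \<nu>" using comp_inj_except[OF a(1) amAL[OF nu]] by blast
      moreover have "?J l = tt_comp d s \<alpha> l" using a(2) l by blast
      ultimately have "?J l = \<nu>" using amc[OF nu] by simp
      then show False using False by simp
    qed
    then show ?thesis using False ttT_val2[OF Jbox] by simp
  qed
qed

lemma cont_act_coord: "continuous_on UNIV (\<lambda>T. act d n g T q)"
proof (cases "q \<in> idxs d n")
  case True
  then show ?thesis unfolding act_def by simp (intro continuous_intros continuous_on_product_coordinates)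
next
  case False
  then show ?thesis unfolding act_def by simp
qed

definition U0 where
  "U0 g' = {T. \<forall>l\<in>{1..d}. Determinant.det (JM (\<lambda>\<nu> \<mu>. act d n g' T ((pts l \<nu>)(l := \<mu>))) (s (l - 1) * s l)) \<noteq> 0}"

lemma U0_open: "open (U0 g')"
proof -
  have "U0 g' = (\<Inter>l\<in>{1..d}. (\<lambda>T. Determinant.det (JM (\<lambda>\<nu> \<mu>. act d n g' T ((pts l \<nu>)(l := \<mu>))) (s (l - 1) * s l))) -` (- {0}))"
    by (auto simp: U0_def)
  moreover have "open ((\<lambda>T. Determinant.det (JM (\<lambda>\<nu> \<mu>. act d n g' T ((pts l \<nu>)(l := \<mu>))) (s (l - 1) * s l))) -` (- {0}))" for l
    by (intro open_vimage open_Compl closed_singleton cont_det cont_act_coord)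
  ultimately show ?thesis by (auto intro: open_INT)
qed

lemma U0_sub: "ttrank_fibre d n s \<inter> U0 g' \<subseteq> orbit d n (ttT d n s)"
proof
  fix T assume T: "T \<in> ttrank_fibre d n s \<inter> U0 g'"
  then have Tt: "T \<in> tensors d n" by (simp add: ttrank_fibre_def)
  have "\<forall>l\<in>{1..d}. s (l - 1) * s l \<le> ml_rank_i d n T l"
  proof
    fix l assume l: "l \<in> {1..d}"
    have mn: "s (l - 1) * s l \<le> n l" using sn l by auto
    have "s (l - 1) * s l \<le> ml_rank_i d n (act d n g' T) l"
      unfolding ml_rank_fv
      by (rule det_easy[where v="\<lambda>\<mu> c. act d n g' T (c(l := \<mu>))" and p="pts l"]) (use T l mn in \<open>auto simp: U0_def\<close>)
    also have "\<dots> \<le> ml_rank_i d n T l" by (rule ml_mono_act[OF Tt l])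
    finally show "s (l - 1) * s l \<le> ml_rank_i d n T l" .
  qed
  moreover obtain h where h: "T = act d n h (ttT d n s)"
    using TTD[of T] T by (auto simp: ttrank_fibre_def)
  ultimately show "T \<in> orbit d n (ttT d n s)" using orbit_crit[of h] by simp
qed

lemma orbit_in_U0:
  assumes T0: "T0 \<in> orbit d n (ttT d n s)"
  shows "\<exists>g'. T0 \<in> U0 g'"
proof -
  obtain g0 where g0: "g0 \<in> Grp d n" "T0 = act d n g0 (ttT d n s)" using T0 by (auto simp: orbit_def)
  obtain g' where g': "\<forall>T\<in>tensors d n. act d n g' (act d n g0 T) = T" using act_inv[OF g0(1)] by blast
  have a: "act d n g' T0 = ttT d n s" using g' g0(2) ttT_tensors by simp
  have "T0 \<in> U0 g'"
    unfolding U0_def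
  proof (intro CollectI ballI)
    fix l assume l: "l \<in> {1..d}"
    have "JM (\<lambda>\<nu> \<mu>. act d n g' T0 ((pts l \<nu>)(l := \<mu>))) (s (l - 1) * s l) = JM (\<lambda>i j. if j = i then 1 else 0) (s (l - 1) * s l)"
      by (rule JM_cong) (simp add: a ml_key[OF l])
    then show "Determinant.det (JM (\<lambda>\<nu> \<mu>. act d n g' T0 ((pts l \<nu>)(l := \<mu>))) (s (l - 1) * s l)) \<noteq> 0"
      using det_id_ne0 by simp
  qed
  then show ?thesis by blast
qed

lemma orbit_open: "openin (top_of_set (ttrank_fibre d n s)) (orbit d n (ttT d n s))"
  unfolding openin_open
proof (intro exI conjI)
  show "open (\<Union>g'. U0 g')" using U0_open by blast
  show "orbit d n (ttT d n s) = ttrank_fibre d n s \<inter> (\<Union>g'. U0 g')"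
  proof (intro equalityI subsetI)
    fix T assume T: "T \<in> orbit d n (ttT d n s)"
    obtain g' where "T \<in> U0 g'" using orbit_in_U0[OF T] by blast
    then show "T \<in> ttrank_fibre d n s \<inter> (\<Union>g'. U0 g')" using T orbit_sub by blast
  next
    fix T assume T: "T \<in> ttrank_fibre d n s \<inter> (\<Union>g'. U0 g')"
    then obtain g' where "T \<in> U0 g'" by blast
    then show "T \<in> orbit d n (ttT d n s)" using T U0_sub[of g'] by blast
  qed
qed

definition Pt where
  "Pt = {p. \<exists>i r c. i \<in> {1..d-1} \<and> (\<forall>\<mu>. r \<mu> \<in> Pi\<^sub>E {1..i} (\<lambda>k. {..<n k})) \<and>
       p = (\<lambda>T. Determinant.det (JM (\<lambda>\<nu> \<mu>. T (merge_idx i (r \<mu>) (c \<nu>))) (s i + 1)))}"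

definition Xle where "Xle = {T \<in> tensors d n. \<forall>i\<in>{1..d-1}. tt_rank_i d n T i \<le> s i}"

lemma PiE_ne:
  assumes "i \<le> d" shows "Pi\<^sub>E {1..i} (\<lambda>k. {..<n k}) \<noteq> {}"
proof -
  have "\<forall>k\<in>{1..i}. {..<n k} \<noteq> {}"
  proof
    fix k assume "k \<in> {1..i}"
    then have "n k \<ge> 2" using n2 assms by auto
    then have "0 \<in> {..<n k}" by simp
    then show "{..<n k} \<noteq> {}" by blast
  qed
  then show ?thesis by (simp add: PiE_eq_empty_iff)
qed

lemma Xle_eq: "Xle = {T \<in> tensors d n. \<forall>p\<in>Pt. p T = 0}"
proof (intro equalityI subsetI)
  fix T assume T: "T \<in> Xle"
  have "p T = 0" if p: "p \<in> Pt" for p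
  proof (rule ccontr)
    assume ne: "p T \<noteq> 0"
    obtain i r c where irc: "i \<in> {1..d-1}" "\<forall>\<mu>. r \<mu> \<in> Pi\<^sub>E {1..i} (\<lambda>k. {..<n k})"
      "p = (\<lambda>T. Determinant.det (JM (\<lambda>\<nu> \<mu>. T (merge_idx i (r \<mu>) (c \<nu>))) (s i + 1)))"
      using p by (auto simp: Pt_def)
    have "s i + 1 \<le> tt_rank_i d n T i"
      unfolding tt_rank_fv
      by (rule det_easy[where v="\<lambda>\<mu> c'. T (merge_idx i (r \<mu>) c')" and p=c]) (use irc ne finite_ttrows in auto)
    moreover have "tt_rank_i d n T i \<le> s i" using T irc(1) by (simp add: Xle_def)
    ultimately show False by simp
  qed
  then show "T \<in> {T \<in> tensors d n. \<forall>p\<in>Pt. p T = 0}" using T by (auto simp: Xle_def)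
next
  fix T assume T: "T \<in> {T \<in> tensors d n. \<forall>p\<in>Pt. p T = 0}"
  have "tt_rank_i d n T i \<le> s i" if i: "i \<in> {1..d-1}" for i
  proof (rule ccontr)
    assume "\<not> tt_rank_i d n T i \<le> s i"
    then have "s i + 1 \<le> fv.dim (trows T i)" by (simp add: tt_rank_fv trows_def)
    moreover have fin: "finite (trows T i)" using finite_ttrows by (simp add: trows_def)
    ultimately obtain v c where vc: "\<forall>\<mu><s i + 1. v \<mu> \<in> trows T i" "Determinant.det (JM (\<lambda>\<nu> \<mu>. v \<mu> (c \<nu>)) (s i + 1)) \<noteq> 0"
      using det_hard[of "trows T i" "s i + 1"] by blast
    define r where "r = (\<lambda>\<mu>. if \<mu> < s i + 1 then (SOME r. r \<in> Pi\<^sub>E {1..i} (\<lambda>k. {..<n k}) \<and> v \<mu> = (\<lambda>c. T (merge_idx i r c)))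
                          else (SOME r. r \<in> Pi\<^sub>E {1..i} (\<lambda>k. {..<n k})))"
    have r1: "r \<mu> \<in> Pi\<^sub>E {1..i} (\<lambda>k. {..<n k}) \<and> v \<mu> = (\<lambda>c. T (merge_idx i (r \<mu>) c))" if "\<mu> < s i + 1" for \<mu>
    proof -
      have ex: "\<exists>r. r \<in> Pi\<^sub>E {1..i} (\<lambda>k. {..<n k}) \<and> v \<mu> = (\<lambda>c. T (merge_idx i r c))"
        using vc(1) that by (auto simp: trows_def)
      have "(SOME r. r \<in> Pi\<^sub>E {1..i} (\<lambda>k. {..<n k}) \<and> v \<mu> = (\<lambda>c. T (merge_idx i r c))) \<in> Pi\<^sub>E {1..i} (\<lambda>k. {..<n k}) \<and>
            v \<mu> = (\<lambda>c. T (merge_idx i (SOME r. r \<in> Pi\<^sub>E {1..i} (\<lambda>k. {..<n k}) \<and> v \<mu> = (\<lambda>c. T (merge_idx i r c))) c))"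
        by (rule someI_ex[OF ex])
      then show ?thesis using that unfolding r_def by simp
    qed
    have r2: "r \<mu> \<in> Pi\<^sub>E {1..i} (\<lambda>k. {..<n k})" for \<mu>
    proof (cases "\<mu> < s i + 1")
      case True then show ?thesis using r1 by blast
    next
      case False
      have "i \<le> d" using i by auto
      then have ex: "\<exists>r. r \<in> Pi\<^sub>E {1..i} (\<lambda>k. {..<n k})" using PiE_ne[of i] by blast
      have "(SOME r. r \<in> Pi\<^sub>E {1..i} (\<lambda>k. {..<n k})) \<in> Pi\<^sub>E {1..i} (\<lambda>k. {..<n k})" by (rule someI_ex[OF ex])
      then show ?thesis using False unfolding r_def by simp
    qed
    let ?p = "\<lambda>T. Determinant.det (JM (\<lambda>\<nu> \<mu>. T (merge_idx i (r \<mu>) (c \<nu>))) (s i + 1))"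
    have "?p \<in> Pt" unfolding Pt_def using i r2 by blast
    moreover have "?p T = Determinant.det (JM (\<lambda>\<nu> \<mu>. v \<mu> (c \<nu>)) (s i + 1))"
      by (rule arg_cong[where f=Determinant.det], rule JM_cong) (use r1 in auto)
    ultimately show False using T vc(2) by auto
  qed
  then show "T \<in> Xle" using T by (auto simp: Xle_def)
qed

lemma Xle_closed: "zclosed d n Xle"
  unfolding zclosed_def
proof (intro exI conjI)
  show "\<forall>p\<in>Pt. polyfun p"
  proof
    fix p assume "p \<in> Pt"
    then obtain i r c where p: "p = (\<lambda>T. Determinant.det (JM (\<lambda>\<nu> \<mu>. T (merge_idx i (r \<mu>) (c \<nu>))) (s i + 1)))"
      by (auto simp: Pt_def)
    show "polyfun p" unfolding p by (rule polyfun_det) (rule pcoord)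
  qed
  show "Xle = {T \<in> tensors d n. \<forall>p\<in>Pt. p T = 0}" by (rule Xle_eq)
qed

definition Pz where
  "Pz = {q. \<exists>a c. (\<forall>l\<in>{1..d}. \<forall>\<mu>. a l \<mu> < n l) \<and>
     q = (\<lambda>T. \<Prod>l\<in>{1..d}. Determinant.det (JM (\<lambda>\<nu> \<mu>. T ((c l \<nu>)(l := a l \<mu>))) (s (l - 1) * s l)))}"

definition Zs where "Zs = {T \<in> tensors d n. \<exists>l\<in>{1..d}. ml_rank_i d n T l < s (l - 1) * s l}"

lemma Zs_eq: "Zs = {T \<in> tensors d n. \<forall>q\<in>Pz. q T = 0}"
proof (intro equalityI subsetI)
  fix T assume T: "T \<in> Zs"
  then obtain l0 where l0: "l0 \<in> {1..d}" "ml_rank_i d n T l0 < s (l0 - 1) * s l0" by (auto simp: Zs_def)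
  have "q T = 0" if q: "q \<in> Pz" for q
  proof -
    obtain a c where ac: "\<forall>l\<in>{1..d}. \<forall>\<mu>. a l \<mu> < n l"
      "q = (\<lambda>T. \<Prod>l\<in>{1..d}. Determinant.det (JM (\<lambda>\<nu> \<mu>. T ((c l \<nu>)(l := a l \<mu>))) (s (l - 1) * s l)))"
      using q by (auto simp: Pz_def)
    have "Determinant.det (JM (\<lambda>\<nu> \<mu>. T ((c l0 \<nu>)(l0 := a l0 \<mu>))) (s (l0 - 1) * s l0)) = 0"
    proof (rule ccontr)
      assume ne: "Determinant.det (JM (\<lambda>\<nu> \<mu>. T ((c l0 \<nu>)(l0 := a l0 \<mu>))) (s (l0 - 1) * s l0)) \<noteq> 0"
      have "s (l0 - 1) * s l0 \<le> ml_rank_i d n T l0"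
        unfolding ml_rank_fv
        by (rule det_easy[where v="\<lambda>\<mu> c'. T (c'(l0 := a l0 \<mu>))" and p="c l0"]) (use ac l0 ne in auto)
      then show False using l0 by simp
    qed
    then show "q T = 0" using ac(2) l0(1) by (auto intro!: prod_zero bexI[of _ l0])
  qed
  then show "T \<in> {T \<in> tensors d n. \<forall>q\<in>Pz. q T = 0}" using T by (auto simp: Zs_def)
next
  fix T assume T: "T \<in> {T \<in> tensors d n. \<forall>q\<in>Pz. q T = 0}"
  show "T \<in> Zs"
  proof (rule ccontr)
    assume "T \<notin> Zs"
    then have ge: "\<forall>l\<in>{1..d}. s (l - 1) * s l \<le> ml_rank_i d n T l" using T by (auto simp: Zs_def not_less)
    have "\<forall>l\<in>{1..d}. \<exists>ac. (\<forall>\<mu>. fst ac \<mu> < n l) \<and> Determinant.det (JM (\<lambda>\<nu> \<mu>. T ((snd ac \<nu>)(l := fst ac \<mu>))) (s (l - 1) * s l)) \<noteq> 0"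
    proof
      fix l assume l: "l \<in> {1..d}"
      have "s (l - 1) * s l \<le> fv.dim ((\<lambda>a c. T (c(l := a))) ` {..<n l})" using ge l by (simp add: ml_rank_fv)
      then obtain v c where vc: "\<forall>\<mu><s (l - 1) * s l. v \<mu> \<in> (\<lambda>a c. T (c(l := a))) ` {..<n l}"
          "Determinant.det (JM (\<lambda>\<nu> \<mu>. v \<mu> (c \<nu>)) (s (l - 1) * s l)) \<noteq> 0"
        using det_hard[of "(\<lambda>a c. T (c(l := a))) ` {..<n l}" "s (l - 1) * s l"] by auto
      define a where "a = (\<lambda>\<mu>. if \<mu> < s (l - 1) * s l then (SOME a. a < n l \<and> v \<mu> = (\<lambda>c. T (c(l := a)))) else 0)"
      have a1: "a \<mu> < n l \<and> v \<mu> = (\<lambda>c. T (c(l := a \<mu>)))" if "\<mu> < s (l - 1) * s l" for \<mu>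
      proof -
        have ex: "\<exists>a. a < n l \<and> v \<mu> = (\<lambda>c. T (c(l := a)))" using vc(1) that by auto
        have "(SOME a. a < n l \<and> v \<mu> = (\<lambda>c. T (c(l := a)))) < n l \<and>
              v \<mu> = (\<lambda>c. T (c(l := (SOME a. a < n l \<and> v \<mu> = (\<lambda>c. T (c(l := a)))))))"
          by (rule someI_ex[OF ex])
        then show ?thesis using that unfolding a_def by simp
      qed
      have a2: "\<forall>\<mu>. a \<mu> < n l"
      proof
        fix \<mu> show "a \<mu> < n l"
        proof (cases "\<mu> < s (l - 1) * s l")
          case True then show ?thesis using a1 by blast
        next
          case False
          have "n l \<ge> 2" using n2 l by blast
          then show ?thesis using False by (simp add: a_def)
        qed
      qed
      have "JM (\<lambda>\<nu> \<mu>. T ((c \<nu>)(l := a \<mu>))) (s (l - 1) * s l) = JM (\<lambda>\<nu> \<mu>. v \<mu> (c \<nu>)) (s (l - 1) * s l)"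
        by (rule JM_cong) (use a1 in auto)
      then have "Determinant.det (JM (\<lambda>\<nu> \<mu>. T ((c \<nu>)(l := a \<mu>))) (s (l - 1) * s l)) \<noteq> 0" using vc(2) by simp
      then show "\<exists>ac. (\<forall>\<mu>. fst ac \<mu> < n l) \<and> Determinant.det (JM (\<lambda>\<nu> \<mu>. T ((snd ac \<nu>)(l := fst ac \<mu>))) (s (l - 1) * s l)) \<noteq> 0"
        using a2 by (intro exI[of _ "(a, c)"]) simp
    qed
    then have ex: "\<exists>ac. (\<forall>\<mu>. fst ac \<mu> < n l) \<and> Determinant.det (JM (\<lambda>\<nu> \<mu>. T ((snd ac \<nu>)(l := fst ac \<mu>))) (s (l - 1) * s l)) \<noteq> 0"
      if "l \<in> {1..d}" for l using that by blast
    define f where "f = (\<lambda>l. SOME ac. (\<forall>\<mu>. fst ac \<mu> < n l) \<and> Determinant.det (JM (\<lambda>\<nu> \<mu>. T ((snd ac \<nu>)(l := fst ac \<mu>))) (s (l - 1) * s l)) \<noteq> 0)"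
    define A where "A = (\<lambda>l. fst (f l))"
    define C where "C = (\<lambda>l. snd (f l))"
    have AC: "(\<forall>\<mu>. A l \<mu> < n l) \<and>
        Determinant.det (JM (\<lambda>\<nu> \<mu>. T ((C l \<nu>)(l := A l \<mu>))) (s (l - 1) * s l)) \<noteq> 0" if "l \<in> {1..d}" for l
      using someI_ex[OF ex[OF that]] unfolding A_def C_def f_def .
    let ?q = "\<lambda>T. \<Prod>l\<in>{1..d}. Determinant.det (JM (\<lambda>\<nu> \<mu>. T ((C l \<nu>)(l := A l \<mu>))) (s (l - 1) * s l))"
    have Al: "\<forall>l\<in>{1..d}. \<forall>\<mu>. A l \<mu> < n l" using AC by blast
    have qP: "?q \<in> Pz" unfolding Pz_def by (intro CollectI exI[of _ A] exI[of _ C] conjI Al refl)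
    have "\<forall>q\<in>Pz. q T = 0" using T by simp
    then have "?q T = 0" using qP by (rule bspec)
    moreover have "?q T \<noteq> 0" using AC by (simp add: prod_zero_iff)
    ultimately show False by simp
  qed
qed

lemma Zs_closed: "zclosed d n Zs"
  unfolding zclosed_def
proof (intro exI conjI)
  show "\<forall>q\<in>Pz. polyfun q"
  proof
    fix q assume "q \<in> Pz"
    then obtain a c where q: "q = (\<lambda>T. \<Prod>l\<in>{1..d}. Determinant.det (JM (\<lambda>\<nu> \<mu>. T ((c l \<nu>)(l := a l \<mu>))) (s (l - 1) * s l)))"
      by (auto simp: Pz_def)
    show "polyfun q" unfolding q by (rule polyfun_prod) (auto intro: polyfun_det pcoord)
  qed
  show "Zs = {T \<in> tensors d n. \<forall>q\<in>Pz. q T = 0}" by (rule Zs_eq)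
qed

lemma zopen: "zopenin d n (zclosure d n (ttrank_fibre d n s)) (orbit d n (ttT d n s))"
  unfolding zopenin_def
proof (intro exI conjI)
  show "zclosed d n Zs" by (rule Zs_closed)
  have fX: "ttrank_fibre d n s \<subseteq> Xle" by (auto simp: ttrank_fibre_def Xle_def)
  have YX: "zclosure d n (ttrank_fibre d n s) \<subseteq> Xle"
    unfolding zclosure_def using Xle_closed fX by blast
  have fY: "ttrank_fibre d n s \<subseteq> zclosure d n (ttrank_fibre d n s)"
    unfolding zclosure_def by blast
  show "orbit d n (ttT d n s) = zclosure d n (ttrank_fibre d n s) - Zs"
  proof (intro equalityI subsetI)
    fix T assume T: "T \<in> orbit d n (ttT d n s)"
    have "T \<in> zclosure d n (ttrank_fibre d n s)" using T orbit_sub fY by blast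
    moreover have "T \<notin> Zs" using orbit_ml[OF T] by (auto simp: Zs_def)
    ultimately show "T \<in> zclosure d n (ttrank_fibre d n s) - Zs" by blast
  next
    fix T assume T: "T \<in> zclosure d n (ttrank_fibre d n s) - Zs"
    then have TX: "T \<in> Xle" using YX by blast
    then have Tt: "T \<in> tensors d n" by (simp add: Xle_def)
    have ge: "\<forall>l\<in>{1..d}. s (l - 1) * s l \<le> ml_rank_i d n T l" using T Tt by (auto simp: Zs_def not_less)
    obtain h where h: "T = act d n h (ttT d n s)" using TTD[OF Tt] TX by (auto simp: Xle_def)
    show "T \<in> orbit d n (ttT d n s)" using orbit_crit[of h] ge h by simp
  qed
qed

end

theorem mainTheorem11:
  fixes d :: nat and n s :: "nat \<Rightarrow> nat"
  assumes hd: "d \<ge> 3"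
    and hn: "\<forall>i\<in>{1..d}. n i \<ge> 2"
    and hs: "\<forall>i\<in>{1..d-1}. s i > 0"
    and hs0: "s 0 = 1" and hsd: "s d = 1"
    and hsn: "\<forall>i\<in>{1..d}. s (i - 1) * s i \<le> n i"
  shows "(\<forall>g\<in>Grp d n. \<forall>T\<in>ttrank_fibre d n s. act d n g T \<in> ttrank_fibre d n s)
    \<and> orbit d n (ttT d n s) \<subseteq> ttrank_fibre d n s
    \<and> openin (top_of_set (ttrank_fibre d n s)) (orbit d n (ttT d n s))
    \<and> ttrank_fibre d n s \<subseteq> closure (orbit d n (ttT d n s))
    \<and> zopenin d n (zclosure d n (ttrank_fibre d n s)) (orbit d n (ttT d n s))
    \<and> orbit d n (ttT d n s) =
        {T \<in> ttrank_fibre d n s. \<forall>i\<in>{1..d}. ml_rank_i d n T i = s (i - 1) * s i}"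
proof -
  interpret TT: tts d n s using hd hn hs hs0 hsd hsn by (simp add: tts_def)
  show ?thesis
  proof (intro conjI)
    show "\<forall>g\<in>Grp d n. \<forall>T\<in>ttrank_fibre d n s. act d n g T \<in> ttrank_fibre d n s"
      using TT.fibre_inv by blast
    show "orbit d n (ttT d n s) \<subseteq> ttrank_fibre d n s" by (rule TT.orbit_sub)
    show "openin (top_of_set (ttrank_fibre d n s)) (orbit d n (ttT d n s))" by (rule TT.orbit_open)
    show "ttrank_fibre d n s \<subseteq> closure (orbit d n (ttT d n s))" using TT.density by blast
    show "zopenin d n (zclosure d n (ttrank_fibre d n s)) (orbit d n (ttT d n s))" by (rule TT.zopen)
    show "orbit d n (ttT d n s) =
        {T \<in> ttrank_fibre d n s. \<forall>i\<in>{1..d}. ml_rank_i d n T i = s (i - 1) * s i}" by (rule TT.orbit_char)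
  qed
qed

end
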